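(* Let $0<q<1$ and $\nu\in\mathbb{R}$. Define, for $z\in\mathbb{C}\setminus(-\infty,0]$ (principal branches of powers), $$I_\nu^{(3)}((1-q^2)z;q^2)=\sum_{k=0}^\infty\frac{q^{k(\nu+k)}(1-q^2)^k(z/2)^{\nu+2k}}{(q^2;q^2)_k\,\Gamma_{q^2}(\nu+k+1)},$$ and, for non-integer $\nu$, $$K_\nu^{(3)}((1-q^2)z;q^2)=\tfrac12 q^{-\nu^2+\nu}\Gamma_{q^2}(\nu)\Gamma_{q^2}(1-\nu)\left[I_{-\nu}^{(3)}((1-q^2)z;q^2)-I_\nu^{(3)}((1-q^2)z;q^2)\right],$$ extended to integer $\nu=n$ by taking the limit $\nu\to n$. Then $$q^{-\nu/2}K_{\nu-1}^{(3)}((1-q^2)z;q^2)-q^{\nu/2}K_{\nu+1}^{(3)}((1-q^2)z;q^2)=-\frac{2}{(1-q^2)z}(q^{-\nu}-q^\nu)K_\nu^{(3)}((1-q^2)q^{1/2}z;q^2),$$ $$q^{-\nu/2}K_{\nu-1}^{(3)}((1-q^2)z;q^2)+q^{\nu/2}K_{\nu+1}^{(3)}((1-q^2)z;q^2)=-\frac{4}{(1-q^2)z}K_\nu^{(3)}((1-q^2)q^{-1/2}z;q^2)+\frac{2}{(1-q^2)z}(q^{-\nu}+q^\nu)K_\nu^{(3)}((1-q^2)q^{1/2}z;q^2).$$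
   Context: $(a;q)_k=\prod_{j=0}^{k-1}(1-aq^j)$, $(a;q)_\infty=\prod_{j\ge0}(1-aq^j)$. The $q$-Gamma function is $\Gamma_{q}(x)=\frac{(q;q)_\infty}{(q^x;q)_\infty}(1-q)^{1-x}$, used here with base $q^2$. *)

theory Defs
  imports "HOL-Analysis.Analysis"
begin

definition qpoch :: "real \<Rightarrow> real \<Rightarrow> nat \<Rightarrow> real" where
  "qpoch a q k = (\<Prod>j<k. 1 - a * q ^ j)"

definition qpoch_inf :: "real \<Rightarrow> real \<Rightarrow> real" where
  "qpoch_inf a q = (\<Prod>j. 1 - a * q ^ j)"

definition qGamma :: "real \<Rightarrow> real \<Rightarrow> real" where
  "qGamma q x = qpoch_inf q q / qpoch_inf (q powr x) q * (1 - q) powr (1 - x)"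

text \<open>I3 q nu z stands for I_nu^(3)((1-q^2) z; q^2).\<close>
definition I3 :: "real \<Rightarrow> real \<Rightarrow> complex \<Rightarrow> complex" where
  "I3 q \<nu> z = (\<Sum>k. complex_of_real
      (q powr (real k * (\<nu> + real k)) * (1 - q^2) ^ k
        / (qpoch (q^2) (q^2) k * qGamma (q^2) (\<nu> + real k + 1)))
      * (z / 2) powr complex_of_real (\<nu> + 2 * real k))"

definition K3_form :: "real \<Rightarrow> real \<Rightarrow> complex \<Rightarrow> complex" where
  "K3_form q \<nu> z = complex_of_real (1/2 * q powr (- (\<nu>^2) + \<nu>)
      * qGamma (q^2) \<nu> * qGamma (q^2) (1 - \<nu>)) * (I3 q (- \<nu>) z - I3 q \<nu> z)"

definition K3 :: "real \<Rightarrow> real \<Rightarrow> complex \<Rightarrow> complex" where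
  "K3 q \<nu> z = (if \<nu> \<in> \<int> then Lim (at \<nu>) (\<lambda>\<mu>. K3_form q \<mu> z) else K3_form q \<nu> z)"

end

theory Submission
  imports Defs "HOL-Complex_Analysis.Complex_Analysis"
begin


definition Pg :: "(nat \<Rightarrow> real) \<Rightarrow> 'a::{real_normed_field,banach} \<Rightarrow> 'a" where
  "Pg a x = (\<Prod>j. 1 - x * of_real (a j))"

lemma Pg_conv:
  fixes x :: "'a::{real_normed_field,banach}"
  assumes "summable (\<lambda>j. \<bar>a j\<bar>)"
  shows "convergent_prod (\<lambda>j. 1 - x * of_real (a j))"
proof -
  have "summable (\<lambda>j. norm x * \<bar>a j\<bar>)" using assms by (rule summable_mult)
  then have "summable (\<lambda>j. norm ((1 - x * of_real (a j)) - 1))"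
    by (simp add: norm_mult)
  then show ?thesis
    by (intro abs_convergent_prod_imp_convergent_prod summable_imp_abs_convergent_prod)
qed

lemma Pg_tendsto:
  fixes x :: "'a::{real_normed_field,banach}"
  assumes "summable (\<lambda>j. \<bar>a j\<bar>)"
  shows "(\<lambda>n. \<Prod>j<n. 1 - x * of_real (a j)) \<longlonglongrightarrow> Pg a x"
  using convergent_prod_LIMSEQ[OF Pg_conv[OF assms, of x]]
  unfolding Pg_def by (subst LIMSEQ_lessThan_iff_atMost) 

lemma Pg_uniform:
  fixes R :: real
  assumes "summable (\<lambda>j. \<bar>a j\<bar>)"
  shows "uniform_limit (cball 0 R) (\<lambda>n x. \<Prod>j<n. 1 - x * of_real (a j))
           (Pg a :: 'a::{real_normed_field,banach,heine_borel} \<Rightarrow> 'a) sequentially"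
proof -
  have "uniform_limit (cball 0 R) (\<lambda>n x::'a. \<Sum>j<n. norm ((1 - x * of_real (a j)) - 1))
          (\<lambda>x. \<Sum>j. norm ((1 - x * of_real (a j)) - 1)) sequentially"
  proof (rule Weierstrass_m_test_ev)
    show "\<forall>\<^sub>F n in sequentially. \<forall>x\<in>cball (0::'a) R. norm (norm ((1 - x * of_real (a n)) - 1)) \<le> R * \<bar>a n\<bar>"
      by (intro always_eventually) (auto simp: norm_mult intro!: mult_right_mono)
    show "summable (\<lambda>n. R * \<bar>a n\<bar>)" using assms by (rule summable_mult)
  qed
  then have "uniformly_convergent_on (cball (0::'a) R) (\<lambda>N x. \<Sum>j<N. norm ((1 - x * of_real (a j)) - 1))"
    unfolding uniformly_convergent_on_def by blast
  then have "uniformly_convergent_on (cball (0::'a) R) (\<lambda>N x. \<Prod>j<N. 1 - x * of_real (a j))"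
    by (intro uniformly_convergent_on_prod') (auto intro!: continuous_intros)
  then obtain l where l: "uniform_limit (cball (0::'a) R) (\<lambda>N x. \<Prod>j<N. 1 - x * of_real (a j)) l sequentially"
    unfolding uniformly_convergent_on_def by blast
  have "l x = Pg a x" if "x \<in> cball 0 R" for x
    using LIMSEQ_unique[OF tendsto_uniform_limitI[OF l that] Pg_tendsto[OF assms]] .
  with l show ?thesis by (metis (no_types, lifting) uniform_limit_cong')
qed

lemma Pg_isCont:
  assumes "summable (\<lambda>j. \<bar>a j\<bar>)"
  shows "isCont (Pg a :: 'a::{real_normed_field,banach,heine_borel} \<Rightarrow> 'a) x"
proof -
  have "continuous_on (cball 0 (norm x + 1)) (Pg a :: 'a \<Rightarrow> 'a)"
    by (rule uniform_limit_theorem[OF _ Pg_uniform[OF assms]])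
       (auto intro!: always_eventually continuous_intros)
  moreover have "x \<in> interior (cball 0 (norm x + 1))" by (simp add: interior_cball)
  ultimately show ?thesis by (rule continuous_on_interior)
qed

lemma Pg_holomorphic:
  assumes "summable (\<lambda>j. \<bar>a j\<bar>)"
  shows "(Pg a :: complex \<Rightarrow> complex) holomorphic_on UNIV"
proof (rule holomorphic_uniform_sequence[where f = "\<lambda>n x. \<Prod>j<n. 1 - x * of_real (a j)"])
  fix x :: complex
  have "cball x 1 \<subseteq> cball 0 (norm x + 1)"
    by (auto simp: dist_norm) (metis add.commute norm_minus_commute norm_triangle_sub add_mono order_trans order_refl)
  then show "\<exists>d>0. cball x d \<subseteq> UNIV \<and> uniform_limit (cball x d) (\<lambda>n x. \<Prod>j<n. 1 - x * of_real (a j)) (Pg a) sequentially"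
    by (intro exI[of _ 1]) (auto intro: uniform_limit_on_subset[OF Pg_uniform[OF assms]])
qed (auto intro!: holomorphic_intros)

lemma Pg_norm_le:
  fixes x :: "'a::{real_normed_field,banach}"
  assumes "summable (\<lambda>j. \<bar>a j\<bar>)"
  shows "norm (Pg a x) \<le> exp (norm x * (\<Sum>j. \<bar>a j\<bar>))"
proof (rule tendsto_le[OF _ tendsto_const tendsto_norm[OF Pg_tendsto[OF assms]]])
  show "\<forall>\<^sub>F n in sequentially. norm (\<Prod>j<n. 1 - x * of_real (a j)) \<le> exp (norm x * (\<Sum>j. \<bar>a j\<bar>))"
  proof (intro always_eventually allI)
    fix n
    have "norm (\<Prod>j<n. 1 - x * of_real (a j)) = (\<Prod>j<n. norm (1 - x * of_real (a j)))"
      by (simp add: prod_norm)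
    also have "\<dots> \<le> (\<Prod>j<n. 1 + norm x * \<bar>a j\<bar>)"
      proof (intro prod_mono conjI)
      fix j assume "j \<in> {..<n}"
      show "0 \<le> norm (1 - x * of_real (a j))" by simp
      have "norm (1 - x * of_real (a j)) \<le> norm (1::'a) + norm (x * of_real (a j))"
        by (rule norm_triangle_ineq4)
      then show "norm (1 - x * of_real (a j)) \<le> 1 + norm x * \<bar>a j\<bar>"
        by (simp add: norm_mult)
    qed
    also have "\<dots> \<le> exp (\<Sum>j<n. norm x * \<bar>a j\<bar>)"
      by (rule prod_le_exp_sum) auto
    also have "(\<Sum>j<n. norm x * \<bar>a j\<bar>) \<le> (\<Sum>j. norm x * \<bar>a j\<bar>)"
      by (intro sum_le_suminf summable_mult assms) auto
    also have "\<dots> = norm x * (\<Sum>j. \<bar>a j\<bar>)" by (intro suminf_mult assms)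
    finally show "norm (\<Prod>j<n. 1 - x * of_real (a j)) \<le> exp (norm x * (\<Sum>j. \<bar>a j\<bar>))"
      by simp
  qed
qed simp

lemma Pg_split:
  fixes x :: "'a::{real_normed_field,banach}"
  assumes "summable (\<lambda>j. \<bar>a j\<bar>)"
  shows "Pg a x = (1 - x * of_real (a m)) * Pg (a(m := 0)) x"
proof -
  have s2: "summable (\<lambda>j. \<bar>(a(m:=0)) j\<bar>)"
    by (rule summable_comparison_test[OF _ assms]) auto
  have hp: "(\<lambda>j. if j = m then 1 - x * of_real (a m) else 1) has_prod (1 - x * of_real (a m))"
    using has_prod_single[of m "\<lambda>_. 1 - x * of_real (a m)"] by simp
  have p1: "prodinf (\<lambda>j. if j = m then 1 - x * of_real (a m) else 1) = 1 - x * of_real (a m)"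
    using has_prod_unique[OF hp] by simp
  have c1: "convergent_prod (\<lambda>j. if j = m then 1 - x * of_real (a m) else 1)"
    using hp p1 convergent_prod_has_prod_iff by metis
  have eq: "prodinf (\<lambda>j. if j = m then 1 - x * of_real (a m) else 1) * Pg (a(m := 0)) x =
        (\<Prod>j. (if j = m then 1 - x * of_real (a m) else 1) * (1 - x * of_real ((a(m:=0)) j)))"
    unfolding Pg_def by (rule prodinf_mult[OF c1 Pg_conv[OF s2]])
  have "(1 - x * of_real (a m)) * Pg (a(m := 0)) x =
        (\<Prod>j. (if j = m then 1 - x * of_real (a m) else 1) * (1 - x * of_real ((a(m:=0)) j)))"
    using eq unfolding p1 .
  also have "\<dots> = Pg a x" unfolding Pg_def by (intro arg_cong[where f=prodinf]) auto
  finally show ?thesis by simp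
qed

lemma Pg_nonzero:
  fixes x :: "'a::{real_normed_field,banach}"
  assumes "summable (\<lambda>j. \<bar>a j\<bar>)" "\<And>j. 1 - x * of_real (a j) \<noteq> 0"
  shows "Pg a x \<noteq> 0"
  unfolding Pg_def by (rule prodinf_nonzero[OF Pg_conv[OF assms(1)] assms(2)])

lemma Pg_of_real:
  assumes "summable (\<lambda>j. \<bar>a j\<bar>)"
  shows "complex_of_real (Pg a x) = Pg a (complex_of_real x)"
proof -
  have "(\<lambda>n. complex_of_real (\<Prod>j<n. 1 - x * of_real (a j))) \<longlonglongrightarrow> of_real (Pg a x)"
    by (intro tendsto_of_real Pg_tendsto assms)
  moreover have "(\<lambda>n. complex_of_real (\<Prod>j<n. 1 - x * of_real (a j))) = (\<lambda>n. \<Prod>j<n. 1 - of_real x * of_real (a j))"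
    by simp
  ultimately show ?thesis using Pg_tendsto[OF assms, of "complex_of_real x"] LIMSEQ_unique by metis
qed



lemma summ_Q: "0 \<le> Q \<Longrightarrow> Q < (1::real) \<Longrightarrow> summable (\<lambda>j. \<bar>Q ^ j\<bar>)"
  by (simp add: summable_geometric)

lemma qpoch_inf_Pg: "qpoch_inf x Q = Pg (\<lambda>j. Q ^ j) x"
  by (simp add: qpoch_inf_def Pg_def)

lemma qpi_shift:
  assumes "0 \<le> Q" "Q < 1"
  shows "qpoch_inf a Q = (1 - a) * qpoch_inf (a * Q) Q"
proof -
  have s: "summable (\<lambda>j. \<bar>Q ^ j\<bar>)" using assms by (rule summ_Q)
  have s2: "summable (\<lambda>j. \<bar>((\<lambda>j. Q ^ j)(0 := 0)) j\<bar>)"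
    by (rule summable_comparison_test[OF _ s]) auto
  have "qpoch_inf a Q = (1 - a) * Pg ((\<lambda>j. Q ^ j)(0 := 0)) a"
    unfolding qpoch_inf_Pg using Pg_split[OF s, of a 0] by simp
  also have "Pg ((\<lambda>j. Q ^ j)(0 := 0)) a = (\<Prod>n. 1 - a * ((\<lambda>j. Q ^ j)(0 := 0)) (Suc n))"
    unfolding Pg_def using prodinf_split_head[OF Pg_conv[OF s2, of a]] by simp
  also have "\<dots> = qpoch_inf (a * Q) Q"
    unfolding qpoch_inf_def by (simp add: mult_ac)
  finally show ?thesis .
qed

lemma qpi_zero:
  assumes "0 \<le> Q" "Q < 1" "a * Q ^ m = 1"
  shows "qpoch_inf a Q = 0"
proof -
  have s: "summable (\<lambda>j. \<bar>Q ^ j\<bar>)" using assms by (intro summ_Q)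
  show ?thesis unfolding qpoch_inf_Pg using Pg_split[OF s, of a m] assms by simp
qed

lemma qpi_Q_nz:
  assumes "0 < Q" "Q < 1"
  shows "qpoch_inf Q Q \<noteq> 0"
proof -
  have s: "summable (\<lambda>j. \<bar>Q ^ j\<bar>)" using assms by (intro summ_Q) auto
  have "Q * Q ^ j < 1" for j
    using power_Suc_less_one[OF assms, of j] by simp
  then show ?thesis unfolding qpoch_inf_Pg
    by (intro Pg_nonzero[OF s]) (auto simp: less_le)
qed

definition rG :: "real \<Rightarrow> real \<Rightarrow> real" where
  "rG Q x = inverse (qGamma Q x)"

lemma rG_eq:
  assumes "0 < Q" "Q < 1"
  shows "rG Q x = qpoch_inf (Q powr x) Q / qpoch_inf Q Q * (1 - Q) powr (x - 1)"
proof -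
  have "(1 - Q) powr (1 - x) * (1 - Q) powr (x - 1) = 1"
    using assms by (simp flip: powr_add)
  then show ?thesis
  using qpi_Q_nz[OF assms] assms
  by (simp add: rG_def qGamma_def field_simps)
qed

lemma rG_rec:
  assumes "0 < Q" "Q < 1"
  shows "rG Q x = (1 - Q powr x) / (1 - Q) * rG Q (x + 1)"
proof -
  have "qpoch_inf (Q powr x) Q = (1 - Q powr x) * qpoch_inf (Q powr (x + 1)) Q"
    using qpi_shift[of Q "Q powr x"] assms by (simp add: powr_add)
  moreover have "(1 - Q) powr (x - 1) = (1 - Q) powr x / (1 - Q)"
    using assms by (simp add: powr_diff)
  ultimately show ?thesis using assms unfolding rG_eq[OF assms] by (simp add: mult_ac)
qed

lemma qpoch_Suc: "qpoch a Q (Suc k) = qpoch a Q k * (1 - a * Q ^ k)"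
  by (simp add: qpoch_def)

lemma qpoch_pos:
  assumes "0 < Q" "Q < 1"
  shows "qpoch Q Q k > 0"
  unfolding qpoch_def
proof (intro prod_pos ballI)
  fix j assume "j \<in> {..<k}"
  have "Q * Q ^ j = Q ^ Suc j" by simp
  also have "\<dots> < 1" using assms by (intro power_Suc_less_one) auto
  finally show "0 < 1 - Q * Q ^ j" by simp
qed

lemma rG_nat:
  assumes "0 < Q" "Q < 1"
  shows "rG Q (real N + 1) = (1 - Q) ^ N / qpoch Q Q N"
proof (induction N)
  case 0
  show ?case using qpi_Q_nz[OF assms] assms by (simp add: rG_eq qpoch_def)
next
  case (Suc N)
  have r: "rG Q (real N + 1) = (1 - Q powr (real N + 1)) / (1 - Q) * rG Q (real (Suc N) + 1)"
    using rG_rec[OF assms, of "real N + 1"] by (simp add: add_ac)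
  have e: "Q powr (real N + 1) = Q ^ Suc N"
    using assms by (metis of_nat_Suc add.commute powr_realpow)
  have lt: "Q ^ Suc N < 1" using assms by (intro power_Suc_less_one) auto
  have "rG Q (real (Suc N) + 1) = rG Q (real N + 1) * (1 - Q) / (1 - Q ^ Suc N)"
    using r e lt assms by (simp add: field_simps)
  also have "\<dots> = (1 - Q) ^ Suc N / qpoch Q Q (Suc N)"
    unfolding Suc qpoch_Suc using lt assms qpoch_pos[OF assms, of N]
    by (simp add: field_simps)
  finally show ?case .
qed

lemma rG_nonpos_int:
  assumes "0 < Q" "Q < 1"
  shows "rG Q (- real i) = 0"
proof -
  have "Q powr (- real i) * Q ^ i = 1"
    using assms by (simp add: powr_minus powr_realpow)
  then have "qpoch_inf (Q powr (- real i)) Q = 0"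
    using assms by (intro qpi_zero) auto
  then show ?thesis using assms by (simp add: rG_eq)
qed



lemma Pg_holo_comp:
  assumes "0 \<le> Q" "Q < 1" "f holomorphic_on S"
  shows "(\<lambda>s. Pg (\<lambda>j. Q ^ j) (f s) :: complex) holomorphic_on S"
proof -
  have "(Pg (\<lambda>j. Q ^ j) \<circ> f) holomorphic_on S"
    by (rule holomorphic_on_compose[OF assms(3)])
       (rule holomorphic_on_subset[OF Pg_holomorphic[OF summ_Q[OF assms(1,2)]]], simp)
  then show ?thesis by (simp add: o_def)
qed

definition cf :: "real \<Rightarrow> real \<Rightarrow> nat \<Rightarrow> real" where
  "cf q \<nu> k = q powr (real k * (\<nu> + real k)) * (1 - q^2) ^ k
        / (qpoch (q^2) (q^2) k * qGamma (q^2) (\<nu> + real k + 1))"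

lemma I3_cf: "I3 q \<nu> z = (\<Sum>k. complex_of_real (cf q \<nu> k) * (z / 2) powr complex_of_real (\<nu> + 2 * real k))"
  by (simp add: I3_def cf_def)

lemma cf_rG: "cf q \<nu> k = q powr (real k * (\<nu> + real k)) * (1 - q^2) ^ k * rG (q^2) (\<nu> + real k + 1) / qpoch (q^2) (q^2) k"
  by (simp add: cf_def rG_def divide_inverse mult_ac)

definition uC :: "real \<Rightarrow> complex \<Rightarrow> nat \<Rightarrow> complex \<Rightarrow> complex" where
  "uC q w k s = of_real ((1 - q^2) ^ k / qpoch (q^2) (q^2) k / qpoch_inf (q^2) (q^2))
      * exp (of_real (ln q) * (of_nat k * (s + of_nat k)))
      * Pg (\<lambda>j. (q^2) ^ j) (exp (of_real (ln (q^2)) * (s + of_nat k + 1)))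
      * exp (of_real (ln (1 - q^2)) * (s + of_nat k))
      * w powr (s + 2 * of_nat k)"

lemma uC_real:
  assumes "0 < q" "q < 1"
  shows "uC q w k (of_real \<nu>) = of_real (cf q \<nu> k) * w powr of_real (\<nu> + 2 * real k)"
proof -
  define Q where "Q = q^2"
  have Q: "0 < Q" "Q < 1" using assms by (auto simp: Q_def power_less_one_iff)
  have e1: "exp (of_real (ln q) * (of_nat k * (of_real \<nu> + of_nat k))) = complex_of_real (q powr (real k * (\<nu> + real k)))"
    using assms by (simp add: powr_def mult_ac flip: exp_of_real)
  have e2: "exp (of_real (ln Q) * (of_real \<nu> + of_nat k + 1)) = complex_of_real (Q powr (\<nu> + real k + 1))"
    using Q by (simp add: powr_def mult_ac flip: exp_of_real)
  have e3: "exp (of_real (ln (1 - Q)) * (of_real \<nu> + of_nat k)) = complex_of_real ((1 - Q) powr (\<nu> + real k))"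
    using Q by (simp add: powr_def mult_ac flip: exp_of_real)
  have e4: "Pg (\<lambda>j. Q ^ j) (complex_of_real (Q powr (\<nu> + real k + 1))) = of_real (qpoch_inf (Q powr (\<nu> + real k + 1)) Q)"
    by (simp add: qpoch_inf_Pg Pg_of_real[OF summ_Q] Q less_imp_le)
  have "cf q \<nu> k = q powr (real k * (\<nu> + real k)) * (1 - Q) ^ k *
      (qpoch_inf (Q powr (\<nu> + real k + 1)) Q / qpoch_inf Q Q * (1 - Q) powr (\<nu> + real k)) / qpoch Q Q k"
    unfolding cf_rG Q_def[symmetric] rG_eq[OF Q] by simp
  then show ?thesis
    unfolding uC_def Q_def[symmetric] e1 e2 e3 e4
    by (simp add: field_simps)
qed

lemma I3_uC:
  assumes "0 < q" "q < 1"
  shows "I3 q \<nu> z = (\<Sum>k. uC q (z / 2) k (of_real \<nu>))"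
  unfolding I3_cf uC_real[OF assms] by simp



definition Cb :: "real \<Rightarrow> complex \<Rightarrow> real \<Rightarrow> real" where
  "Cb q w R = 1 / \<bar>qpoch_inf (q^2) (q^2)\<bar> * exp (exp (- R * ln (q^2)) / (1 - q^2))
     * exp (- R * ln (1 - q^2)) * exp (R * \<bar>ln (norm w)\<bar> + R * pi)"

lemma qpoch_ge:
  assumes "0 < Q" "Q < 1"
  shows "(1 - Q) ^ k \<le> qpoch Q Q k"
proof -
  have "(1 - Q) ^ k = (\<Prod>j<k. 1 - Q)" by simp
  also have "\<dots> \<le> (\<Prod>j<k. 1 - Q * Q ^ j)"
  proof (intro prod_mono conjI)
    fix j assume "j \<in> {..<k}"
    show "0 \<le> 1 - Q" using assms by simp
    have "Q ^ j \<le> 1" using assms by (intro power_le_one) auto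
    then have "Q * Q ^ j \<le> Q" using assms by (simp add: mult_left_le)
    then show "1 - Q \<le> 1 - Q * Q ^ j" by simp
  qed
  finally show ?thesis by (simp add: qpoch_def)
qed

lemma exp_2k: "0 < x \<Longrightarrow> exp (2 * real k * ln x) = (x^2) ^ k"
proof -
  assume x: "0 < x"
  have "exp (2 * real k * ln x) = exp (real k * ln (x^2))" using ln_realpow[of x 2] by (simp add: mult_ac)
  also have "\<dots> = exp (ln (x^2)) ^ k" by (rule exp_of_nat_mult)
  also have "\<dots> = (x^2) ^ k" using x by simp
  finally show ?thesis .
qed

lemma uC_bound:
  assumes q: "0 < q" "q < 1" and w: "w \<noteq> 0" and s: "norm s \<le> R"
  shows "norm (uC q w k s) \<le> Cb q w R * (q ^ k * exp (- R * ln q) * (norm w)^2) ^ k"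
proof -
  define Q where "Q = q^2"
  have Q: "0 < Q" "Q < 1" using q by (auto simp: Q_def power_less_one_iff)
  have R: "0 \<le> R" using s norm_ge_zero order_trans by blast
  have reS: "- R \<le> Re s" "Re s \<le> R" "\<bar>Im s\<bar> \<le> R"
    using abs_Re_le_cmod[of s] abs_Im_le_cmod[of s] s by auto
  have lnq: "ln q < 0" using q by simp
  have lnQ: "ln Q < 0" using Q by simp
  have ln1Q: "ln (1 - Q) < 0" using Q by simp
  have PQ: "qpoch_inf Q Q \<noteq> 0" by (rule qpi_Q_nz[OF Q])
  have n1: "norm (complex_of_real ((1 - Q) ^ k / qpoch Q Q k / qpoch_inf Q Q)) \<le> 1 / \<bar>qpoch_inf Q Q\<bar>"
  proof -
    have le1: "(1 - Q) ^ k / qpoch Q Q k \<le> 1"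
      using qpoch_ge[OF Q, of k] qpoch_pos[OF Q, of k] by simp
    have nn: "0 \<le> (1 - Q) ^ k / qpoch Q Q k"
      using qpoch_pos[OF Q, of k] Q by simp
    have "(1 - Q) ^ k / qpoch Q Q k / \<bar>qpoch_inf Q Q\<bar> \<le> 1 / \<bar>qpoch_inf Q Q\<bar>"
      by (rule divide_right_mono[OF le1]) simp
    then have "\<bar>(1 - Q) ^ k / qpoch Q Q k\<bar> / \<bar>qpoch_inf Q Q\<bar> \<le> 1 / \<bar>qpoch_inf Q Q\<bar>"
      unfolding abs_of_nonneg[OF nn] .
    then show ?thesis unfolding norm_of_real abs_divide[symmetric] .
  qed
  have n2: "norm (exp (complex_of_real (ln q) * (of_nat k * (s + of_nat k)))) \<le> (q ^ k * exp (- R * ln q)) ^ k"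
  proof -
    have "norm (exp (complex_of_real (ln q) * (of_nat k * (s + of_nat k)))) = exp (ln q * (real k * (Re s + real k)))"
      by (simp add: norm_exp_eq_Re)
    also have "\<dots> \<le> exp (ln q * (real k * (real k - R)))"
      using lnq reS by (intro exp_le_cancel_iff[THEN iffD2] mult_left_mono_neg mult_left_mono) auto
    also have "\<dots> = exp (real k * (real k * ln q - R * ln q))"
      by (simp add: algebra_simps)
    also have "\<dots> = exp (real k * ln q + (- R * ln q)) ^ k"
      by (subst exp_of_nat_mult[symmetric]) simp
    also have "\<dots> = (exp (real k * ln q) * exp (- R * ln q)) ^ k"
      by (simp only: exp_add)
    also have "exp (real k * ln q) = q ^ k"
      using q by (simp add: exp_of_nat_mult)
    finally show ?thesis .
  qed
  have n3: "norm (Pg (\<lambda>j. Q ^ j) (exp (complex_of_real (ln Q) * (s + of_nat k + 1)))) \<le> exp (exp (- R * ln Q) / (1 - Q))"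
  proof -
    have sQ: "summable (\<lambda>j. \<bar>Q ^ j\<bar>)" using Q by (intro summ_Q) auto
    have sum: "(\<Sum>j. \<bar>Q ^ j\<bar>) = 1 / (1 - Q)" using Q by (simp add: suminf_geometric)
    have "norm (exp (complex_of_real (ln Q) * (s + of_nat k + 1))) = exp (ln Q * (Re s + real k + 1))"
      by (simp add: norm_exp_eq_Re)
    also have "\<dots> \<le> exp (- R * ln Q)"
    proof (intro exp_le_cancel_iff[THEN iffD2])
      have "- R \<le> Re s + real k + 1" using reS by simp
      from mult_left_mono_neg[OF this less_imp_le[OF lnQ]] show "ln Q * (Re s + real k + 1) \<le> - R * ln Q"
        by (simp add: mult_ac)
    qed
    finally have le: "norm (exp (complex_of_real (ln Q) * (s + of_nat k + 1))) \<le> exp (- R * ln Q)" .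
    have "norm (Pg (\<lambda>j. Q ^ j) (exp (complex_of_real (ln Q) * (s + of_nat k + 1))))
        \<le> exp (norm (exp (complex_of_real (ln Q) * (s + of_nat k + 1))) * (\<Sum>j. \<bar>Q ^ j\<bar>))"
      by (rule Pg_norm_le[OF sQ])
    also have "\<dots> \<le> exp (exp (- R * ln Q) / (1 - Q))"
      unfolding sum using le Q by (simp add: divide_right_mono)
    finally show ?thesis .
  qed
  have n4: "norm (exp (complex_of_real (ln (1 - Q)) * (s + of_nat k))) \<le> exp (- R * ln (1 - Q))"
  proof -
    have "norm (exp (complex_of_real (ln (1 - Q)) * (s + of_nat k))) = exp (ln (1 - Q) * (Re s + real k))"
      by (simp add: norm_exp_eq_Re)
    also have "\<dots> \<le> exp (- R * ln (1 - Q))"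
    proof (intro exp_le_cancel_iff[THEN iffD2])
      have "- R \<le> Re s + real k" using reS by simp
      from mult_left_mono_neg[OF this less_imp_le[OF ln1Q]] show "ln (1 - Q) * (Re s + real k) \<le> - R * ln (1 - Q)"
        by (simp add: mult_ac)
    qed
    finally show ?thesis .
  qed
  have n5: "norm (w powr (s + 2 * of_nat k)) \<le> exp (R * \<bar>ln (norm w)\<bar> + R * pi) * ((norm w)^2) ^ k"
  proof -
    have "norm (w powr (s + 2 * of_nat k)) = exp (Re ((s + 2 * of_nat k) * Ln w))"
      using w by (simp add: powr_def norm_exp_eq_Re)
    also have "Re ((s + 2 * of_nat k) * Ln w) = (Re s * ln (norm w) - Im s * Im (Ln w)) + 2 * real k * ln (norm w)"
      using w by (simp add: algebra_simps)
    also have "exp \<dots> = exp (Re s * ln (norm w) - Im s * Im (Ln w)) * exp (2 * real k * ln (norm w))"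
      by (simp only: exp_add)
    also have "\<dots> = exp (Re s * ln (norm w) - Im s * Im (Ln w)) * ((norm w)^2) ^ k"
      using w by (simp add: exp_2k)
    also have "\<dots> \<le> exp (R * \<bar>ln (norm w)\<bar> + R * pi) * ((norm w)^2) ^ k"
    proof (intro mult_right_mono exp_le_cancel_iff[THEN iffD2])
      have reA: "\<bar>Re s\<bar> \<le> R" using reS by auto
      have "Re s * ln (norm w) \<le> \<bar>Re s\<bar> * \<bar>ln (norm w)\<bar>" by (simp only: abs_mult[symmetric] abs_ge_self)
      also have "\<dots> \<le> R * \<bar>ln (norm w)\<bar>" by (rule mult_right_mono[OF reA]) simp
      finally have a: "Re s * ln (norm w) \<le> R * \<bar>ln (norm w)\<bar>" .
      have pi: "\<bar>Im (Ln w)\<bar> \<le> pi" using mpi_less_Im_Ln[OF w] Im_Ln_le_pi[OF w] by auto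
      have "- Im s * Im (Ln w) \<le> \<bar>Im s\<bar> * \<bar>Im (Ln w)\<bar>"
        by (metis abs_ge_self abs_minus_cancel abs_mult mult_minus_left)
      also have "\<dots> \<le> R * pi" by (rule mult_mono[OF reS(3) pi]) (use R in auto)
      finally have b: "- Im s * Im (Ln w) \<le> R * pi" .
      show "Re s * ln (norm w) - Im s * Im (Ln w) \<le> R * \<bar>ln (norm w)\<bar> + R * pi"
        using a b by simp
    qed simp
    finally show ?thesis .
  qed
  have "norm (uC q w k s) =
      norm (complex_of_real ((1 - Q) ^ k / qpoch Q Q k / qpoch_inf Q Q))
      * norm (exp (complex_of_real (ln q) * (of_nat k * (s + of_nat k))))
      * norm (Pg (\<lambda>j. Q ^ j) (exp (complex_of_real (ln Q) * (s + of_nat k + 1))))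
      * norm (exp (complex_of_real (ln (1 - Q)) * (s + of_nat k)))
      * norm (w powr (s + 2 * of_nat k))"
    unfolding uC_def Q_def norm_mult by simp
  also have "\<dots> \<le> (1 / \<bar>qpoch_inf Q Q\<bar>) * (q ^ k * exp (- R * ln q)) ^ k * exp (exp (- R * ln Q) / (1 - Q))
       * exp (- R * ln (1 - Q)) * (exp (R * \<bar>ln (norm w)\<bar> + R * pi) * ((norm w)^2) ^ k)"
    using q by (intro mult_mono n1 n2 n3 n4 n5 mult_nonneg_nonneg) auto
  also have "\<dots> = Cb q w R * (q ^ k * exp (- R * ln q) * (norm w)^2) ^ k"
    unfolding Cb_def Q_def by (simp add: power_mult_distrib mult_ac)
  finally show ?thesis .
qed

lemma summable_bound:
  assumes q: "0 < q" "q < 1"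
  shows "summable (\<lambda>k. Cb q w R * (q ^ k * exp (- R * ln q) * (norm w)^2) ^ k)"
proof -
  have "(\<lambda>k. q ^ k * (exp (- R * ln q) * (norm w)^2)) \<longlonglongrightarrow> 0 * (exp (- R * ln q) * (norm w)^2)"
    by (intro tendsto_mult LIMSEQ_power_zero tendsto_const) (use q in auto)
  then have "eventually (\<lambda>k. q ^ k * (exp (- R * ln q) * (norm w)^2) < 1/2) sequentially"
    by (intro order_tendstoD) auto
  then have ev: "eventually (\<lambda>k. norm ((q ^ k * exp (- R * ln q) * (norm w)^2) ^ k) \<le> (1/2) ^ k) sequentially"
  proof (rule eventually_mono)
    fix k assume "q ^ k * (exp (- R * ln q) * (norm w)^2) < 1/2"
    moreover have "0 \<le> q ^ k * (exp (- R * ln q) * (norm w)^2)" using q by simp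
    ultimately show "norm ((q ^ k * exp (- R * ln q) * (norm w)^2) ^ k) \<le> (1/2) ^ k"
      by (simp add: norm_power mult_ac power_mono)
  qed
  have "summable (\<lambda>k. (q ^ k * exp (- R * ln q) * (norm w)^2) ^ k)"
    by (rule summable_comparison_test_ev[OF ev]) (simp add: summable_geometric)
  then show ?thesis by (rule summable_mult)
qed



definition IC :: "real \<Rightarrow> complex \<Rightarrow> complex \<Rightarrow> complex" where
  "IC q w s = (\<Sum>k. uC q w k s)"

lemma uC_summable:
  assumes q: "0 < q" "q < 1" and w: "w \<noteq> 0"
  shows "summable (\<lambda>k. uC q w k s)"
proof (rule summable_norm_cancel, rule summable_comparison_test[OF _ summable_bound[OF q, of w "norm s"]])
  show "\<exists>N. \<forall>n\<ge>N. norm (norm (uC q w n s)) \<le> Cb q w (norm s) * (q ^ n * exp (- norm s * ln q) * (norm w)^2) ^ n"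
    using uC_bound[OF q w, of s "norm s"] by auto
qed

lemma uC_holo:
  assumes q: "0 < q" "q < 1"
  shows "uC q w k holomorphic_on UNIV"
proof -
  have Q: "0 \<le> q^2" "q^2 < 1" using q by (auto simp: power_less_one_iff)
  show ?thesis unfolding uC_def
    by (intro holomorphic_intros Pg_holo_comp[OF Q])
qed

lemma IC_holo:
  assumes q: "0 < q" "q < 1" and w: "w \<noteq> 0"
  shows "IC q w holomorphic_on UNIV"
proof (rule holomorphic_uniform_sequence[where f = "\<lambda>n s. \<Sum>k<n. uC q w k s"])
  fix x :: complex
  have "uniform_limit (cball x 1) (\<lambda>n s. \<Sum>k<n. uC q w k s) (\<lambda>s. \<Sum>k. uC q w k s) sequentially"
  proof (rule Weierstrass_m_test_ev)
    show "\<forall>\<^sub>F n in sequentially. \<forall>s\<in>cball x 1. norm (uC q w n s) \<le> Cb q w (norm x + 1) * (q ^ n * exp (- (norm x + 1) * ln q) * (norm w)^2) ^ n"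
    proof (intro always_eventually allI ballI uC_bound[OF q w])
      fix s assume "s \<in> cball x 1"
      then have "norm (s - x) \<le> 1" by (simp add: dist_norm norm_minus_commute)
      then show "norm s \<le> norm x + 1" using norm_triangle_sub[of s x] by simp
    qed
  qed (rule summable_bound[OF q])
  then show "\<exists>d>0. cball x d \<subseteq> UNIV \<and> uniform_limit (cball x d) (\<lambda>n s. \<Sum>k<n. uC q w k s) (IC q w) sequentially"
    unfolding IC_def by (intro exI[of _ 1]) auto
qed (auto intro!: holomorphic_intros uC_holo[OF q])

lemma I3_IC:
  assumes "0 < q" "q < 1"
  shows "I3 q \<nu> z = IC q (z / 2) (of_real \<nu>)"
  unfolding I3_uC[OF assms] IC_def ..

lemma I3_sums:
  assumes q: "0 < q" "q < 1" and z: "z \<noteq> 0"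
  shows "(\<lambda>k. complex_of_real (cf q \<nu> k) * (z / 2) powr complex_of_real (\<nu> + 2 * real k)) sums I3 q \<nu> z"
proof -
  have "summable (\<lambda>k. uC q (z/2) k (of_real \<nu>))" using z by (intro uC_summable[OF q]) auto
  then show ?thesis unfolding I3_cf using uC_real[OF q] by (simp add: summable_sums)
qed

lemma cf_R1:
  assumes q: "0 < q" "q < 1"
  shows "cf q (\<nu> - 1) k = inverse (q ^ k) * ((1 - (q^2) powr (\<nu> + real k)) / (1 - q^2)) * cf q \<nu> k"
proof -
  have Q: "0 < q^2" "q^2 < 1" using q by (auto simp: power_less_one_iff)
  have e1: "q powr (real k * (\<nu> - 1 + real k)) = q powr (real k * (\<nu> + real k)) * inverse (q ^ k)"
  proof -
    have "real k * (\<nu> - 1 + real k) = real k * (\<nu> + real k) - real k" by (simp add: algebra_simps)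
    then show ?thesis using q by (simp add: powr_diff powr_realpow divide_inverse)
  qed
  have e2: "rG (q^2) (\<nu> - 1 + real k + 1) = (1 - (q^2) powr (\<nu> + real k)) / (1 - q^2) * rG (q^2) (\<nu> + real k + 1)"
    using rG_rec[OF Q, of "\<nu> + real k"] by simp
  show ?thesis unfolding cf_rG e1 e2 by (simp add: field_simps)
qed

lemma cf_R2:
  assumes q: "0 < q" "q < 1"
  shows "cf q (\<nu> + 1) j = inverse (q powr (\<nu> + real j + 1)) * ((1 - (q^2) ^ (Suc j)) / (1 - q^2)) * cf q \<nu> (Suc j)"
proof -
  have Q: "0 < q^2" "q^2 < 1" using q by (auto simp: power_less_one_iff)
  have lt: "(q^2) ^ Suc j < 1" using Q by (intro power_Suc_less_one) auto
  have e1: "q powr (real (Suc j) * (\<nu> + real (Suc j))) = q powr (real j * (\<nu> + 1 + real j)) * q powr (\<nu> + real j + 1)"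
  proof -
    have "real (Suc j) * (\<nu> + real (Suc j)) = real j * (\<nu> + 1 + real j) + (\<nu> + real j + 1)" by (simp add: algebra_simps)
    then show ?thesis by (simp add: powr_add)
  qed
  have e2: "\<nu> + real (Suc j) + 1 = \<nu> + 1 + real j + 1" by simp
  have e3: "qpoch (q^2) (q^2) (Suc j) = qpoch (q^2) (q^2) j * (1 - (q^2) ^ Suc j)"
    by (simp add: qpoch_Suc)
  have pos: "qpoch (q^2) (q^2) j > 0" by (rule qpoch_pos[OF Q])
  define P1 where "P1 = q powr (real j * (\<nu> + 1 + real j))"
  define P2 where "P2 = q powr (\<nu> + real j + 1)"
  define G where "G = rG (q^2) (\<nu> + 1 + real j + 1)"
  define qp where "qp = qpoch (q^2) (q^2) j"
  define D where "D = 1 - (q^2) ^ Suc j"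
  define E where "E = 1 - q^2"
  have a: "cf q \<nu> (Suc j) = P1 * P2 * (E ^ j * E) * G / (qp * D)"
    unfolding cf_rG e1 e2 e3 P1_def P2_def G_def qp_def D_def E_def by (simp add: mult_ac)
  have b: "cf q (\<nu> + 1) j = P1 * E ^ j * G / qp"
    unfolding cf_rG P1_def G_def qp_def E_def by (simp add: add_ac)
  have nz: "P2 \<noteq> 0" "D \<noteq> 0" "E \<noteq> 0" "qp \<noteq> 0"
    using lt pos q Q unfolding P2_def D_def E_def qp_def by auto
  show ?thesis unfolding a b D_def[symmetric] E_def[symmetric] P2_def[symmetric] using nz
    by (simp add: field_simps)
qed



lemma powr_minus1:
  fixes w :: complex
  assumes "w \<noteq> 0"
  shows "w powr (of_real (y - 1)) = w powr (of_real y) / w"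
  using assms by (simp add: powr_def exp_diff left_diff_distrib)

lemma powr_scale:
  fixes w :: complex
  assumes "0 < r"
  shows "(of_real r * w) powr (of_real y) = of_real (r powr y) * w powr (of_real y)"
  using assms by (simp add: powr_times_real_left powr_of_real)

lemma hfacts:
  assumes q: "0 < q" "q < 1"
  shows "q powr (- \<nu> / 2) = inverse (q powr (\<nu>/2))"
    and "(q^2) powr (\<nu> + real k) = (q powr (\<nu>/2)) ^ 4 * (q ^ k) ^ 2"
    and "q powr (\<nu> + real k) = (q powr (\<nu>/2)) ^ 2 * q ^ k"
    and "(q^2) ^ k = (q ^ k) ^ 2"
    and "q powr (- \<nu>) = inverse ((q powr (\<nu>/2)) ^ 2)"
    and "q powr \<nu> = (q powr (\<nu>/2)) ^ 2"
    and "(q powr (1/2)) powr (\<nu> + 2 * real k) = q powr (\<nu>/2) * q ^ k"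
    and "(q powr (-1/2)) powr (\<nu> + 2 * real k) = inverse (q powr (\<nu>/2) * q ^ k)"
proof -
  have hh: "q powr \<nu> = (q powr (\<nu>/2)) ^ 2"
    using powr_add[of q "\<nu>/2" "\<nu>/2"] by (simp add: power2_eq_square)
  have qk: "q powr real k = q ^ k" using q by (simp add: powr_realpow)
  show "q powr (- \<nu> / 2) = inverse (q powr (\<nu>/2))" by (simp add: powr_minus[symmetric])
  show "q powr (\<nu> + real k) = (q powr (\<nu>/2)) ^ 2 * q ^ k" by (simp add: powr_add hh qk)
  then show "(q^2) powr (\<nu> + real k) = (q powr (\<nu>/2)) ^ 4 * (q ^ k) ^ 2"
    using q by (simp add: power2_eq_square powr_mult power_mult_distrib power4_eq_xxxx flip: power_mult)
  show "(q^2) ^ k = (q ^ k) ^ 2" by (simp flip: power_mult add: mult.commute)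
  show "q powr (- \<nu>) = inverse ((q powr (\<nu>/2)) ^ 2)" by (simp add: powr_minus hh)
  show "q powr \<nu> = (q powr (\<nu>/2)) ^ 2" by (rule hh)
  show h7: "(q powr (1/2)) powr (\<nu> + 2 * real k) = q powr (\<nu>/2) * q ^ k"
    using q by (simp add: powr_powr powr_add qk[symmetric] field_simps)
  have "q powr (-1/2) = inverse (q powr (1/2))" using powr_minus[of q "1/2"] by simp
  then show "(q powr (-1/2)) powr (\<nu> + 2 * real k) = inverse (q powr (\<nu>/2) * q ^ k)"
    by (simp only: inverse_powr h7)
qed

lemma algA: fixes h x E c :: real
  assumes "h>0" "x>0" "E\<noteq>0"
  shows "inverse h * (inverse x * ((1 - h^4*x^2)/E) * c) - h * inverse(h^2*x) * ((1 - x^2)/E) * c = (inverse(h^2) - h^2)/E * (h*x) * c"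
proof -
  have "inverse h * (inverse x * ((1 - h^4*x^2)/E) * c) - h * inverse(h^2*x) * ((1 - x^2)/E) * c
       = c * ((1 - h^4*x^2) - (1 - x^2)) / (h * x * E)"
    using assms by (simp add: field_simps power2_eq_square)
  also have "\<dots> = c * (x^2 * (1 - h^4)) / (h * x * E)" by (simp add: algebra_simps)
  also have "\<dots> = (inverse(h^2) - h^2)/E * (h*x) * c"
    using assms by (simp add: field_simps power2_eq_square power4_eq_xxxx)
  finally show ?thesis .
qed

lemma algB: fixes h x E c :: real
  assumes "h>0" "x>0" "E\<noteq>0"
  shows "inverse h * (inverse x * ((1 - h^4*x^2)/E) * c) + h * inverse(h^2*x) * ((1 - x^2)/E) * c = 2 / E * inverse (h*x) * c - (inverse(h^2) + h^2)/E * (h*x) * c"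
proof -
  have "inverse h * (inverse x * ((1 - h^4*x^2)/E) * c) + h * inverse(h^2*x) * ((1 - x^2)/E) * c
       = c * ((1 - h^4*x^2) + (1 - x^2)) / (h * x * E)"
    using assms by (simp add: field_simps power2_eq_square)
  also have "\<dots> = c * (2 - x^2 * (1 + h^4)) / (h * x * E)" by (simp add: algebra_simps)
  also have "\<dots> = 2 / E * inverse (h*x) * c - (inverse(h^2) + h^2)/E * (h*x) * c"
    using assms by (simp add: field_simps power2_eq_square power4_eq_xxxx)
  finally show ?thesis .
qed

lemma coefA:
  assumes q: "0 < q" "q < 1"
  shows "q powr (- \<nu> / 2) * cf q (\<nu> - 1) k
     - q powr (\<nu>/2) * inverse (q powr (\<nu> + real k)) * ((1 - (q^2) ^ k) / (1 - q^2)) * cf q \<nu> k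
   = (q powr (- \<nu>) - q powr \<nu>) / (1 - q^2) * (q powr (1/2)) powr (\<nu> + 2 * real k) * cf q \<nu> k"
proof -
  define h where "h = q powr (\<nu>/2)"
  define x where "x = q ^ k"
  have h: "h > 0" using q by (simp add: h_def)
  have x: "x > 0" using q by (simp add: x_def)
  have "q^2 < 1" using q by (auto simp: power_less_one_iff)
  then have E: "1 - q^2 \<noteq> 0" by simp
  have f1: "q powr (- \<nu> / 2) = inverse h" unfolding h_def by (rule hfacts(1)[OF q])
  have f2: "(q^2) powr (\<nu> + real k) = h ^ 4 * x ^ 2" unfolding h_def x_def by (rule hfacts(2)[OF q])
  have f3: "q powr (\<nu> + real k) = h ^ 2 * x" unfolding h_def x_def by (rule hfacts(3)[OF q])
  have f4: "(q^2) ^ k = x ^ 2" unfolding x_def by (rule hfacts(4)[OF q])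
  have f5: "q powr (- \<nu>) = inverse (h ^ 2)" unfolding h_def by (rule hfacts(5)[OF q])
  have f6: "q powr \<nu> = h ^ 2" unfolding h_def by (rule hfacts(6)[OF q])
  have f7: "(q powr (1/2)) powr (\<nu> + 2 * real k) = h * x" unfolding h_def x_def by (rule hfacts(7)[OF q])
  have f8: "(q powr (-1/2)) powr (\<nu> + 2 * real k) = inverse (h * x)" unfolding h_def x_def by (rule hfacts(8)[OF q])
  have f9: "q powr (\<nu>/2) = h" by (simp add: h_def)
  have f10: "inverse (q ^ k) = inverse x" by (simp add: x_def)
  show ?thesis
    unfolding cf_R1[OF q] f1 f2 f3 f4 f5 f6 f7 f8 f9 f10
    by (rule algA[OF h x E])
qed

lemma coefB:
  assumes q: "0 < q" "q < 1"
  shows "q powr (- \<nu> / 2) * cf q (\<nu> - 1) k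
     + q powr (\<nu>/2) * inverse (q powr (\<nu> + real k)) * ((1 - (q^2) ^ k) / (1 - q^2)) * cf q \<nu> k
   = 2 / (1 - q^2) * (q powr (-1/2)) powr (\<nu> + 2 * real k) * cf q \<nu> k
     - (q powr (- \<nu>) + q powr \<nu>) / (1 - q^2) * (q powr (1/2)) powr (\<nu> + 2 * real k) * cf q \<nu> k"
proof -
  define h where "h = q powr (\<nu>/2)"
  define x where "x = q ^ k"
  have h: "h > 0" using q by (simp add: h_def)
  have x: "x > 0" using q by (simp add: x_def)
  have "q^2 < 1" using q by (auto simp: power_less_one_iff)
  then have E: "1 - q^2 \<noteq> 0" by simp
  have f1: "q powr (- \<nu> / 2) = inverse h" unfolding h_def by (rule hfacts(1)[OF q])
  have f2: "(q^2) powr (\<nu> + real k) = h ^ 4 * x ^ 2" unfolding h_def x_def by (rule hfacts(2)[OF q])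
  have f3: "q powr (\<nu> + real k) = h ^ 2 * x" unfolding h_def x_def by (rule hfacts(3)[OF q])
  have f4: "(q^2) ^ k = x ^ 2" unfolding x_def by (rule hfacts(4)[OF q])
  have f5: "q powr (- \<nu>) = inverse (h ^ 2)" unfolding h_def by (rule hfacts(5)[OF q])
  have f6: "q powr \<nu> = h ^ 2" unfolding h_def by (rule hfacts(6)[OF q])
  have f7: "(q powr (1/2)) powr (\<nu> + 2 * real k) = h * x" unfolding h_def x_def by (rule hfacts(7)[OF q])
  have f8: "(q powr (-1/2)) powr (\<nu> + 2 * real k) = inverse (h * x)" unfolding h_def x_def by (rule hfacts(8)[OF q])
  have f9: "q powr (\<nu>/2) = h" by (simp add: h_def)
  have f10: "inverse (q ^ k) = inverse x" by (simp add: x_def)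
  show ?thesis
    unfolding cf_R1[OF q] f1 f2 f3 f4 f5 f6 f7 f8 f9 f10
    by (rule algB[OF h x E])
qed



lemma cplx_alg1:
  fixes w V :: complex and E d c p :: real
  assumes "w \<noteq> 0" "E \<noteq> 0"
  shows "2 / (of_real E * (2 * w)) * of_real d * (of_real c * (of_real p * V)) = of_real (d / E * p * c) * (V / w)"
  using assms by (simp add: field_simps)

lemma cplx_alg2:
  fixes w V :: complex and E d c p :: real
  assumes "w \<noteq> 0" "E \<noteq> 0"
  shows "4 / (of_real E * (2 * w)) * (of_real c * (of_real p * V)) = of_real (2 / E * p * c) * (V / w)"
  using assms by (simp add: field_simps)

lemma I3_scaled_sums:
  assumes q: "0 < q" "q < 1" and z: "z \<noteq> 0" and r: "0 < r"
  shows "(\<lambda>k. complex_of_real (cf q \<nu> k) * (complex_of_real (r powr (\<nu> + 2 * real k)) * (z / 2) powr complex_of_real (\<nu> + 2 * real k)))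
          sums I3 q \<nu> (of_real r * z)"
proof -
  have nz: "of_real r * z \<noteq> 0" using z r by simp
  have e: "(of_real r * z) / 2 = of_real r * (z / 2)" by simp
  from I3_sums[OF q nz, of \<nu>] show ?thesis
    unfolding e powr_scale[OF r] .
qed

lemma b_shift_sums:
  assumes q: "0 < q" "q < 1" and z: "z \<noteq> 0"
  defines "w \<equiv> z / 2"
  shows "(\<lambda>k. complex_of_real (q powr (\<nu>/2) * inverse (q powr (\<nu> + real k)) * ((1 - (q^2) ^ k) / (1 - q^2)) * cf q \<nu> k)
            * (w powr of_real (\<nu> + 2 * real k) / w))
         sums (of_real (q powr (\<nu>/2)) * I3 q (\<nu> + 1) z)" (is "?b sums ?S")
proof -
  have w: "w \<noteq> 0" using z by (simp add: w_def)
  have "(\<lambda>n. ?b (Suc n)) = (\<lambda>k. of_real (q powr (\<nu>/2)) * (complex_of_real (cf q (\<nu> + 1) k) * w powr complex_of_real (\<nu> + 1 + 2 * real k)))"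
  proof
    fix k
    have e1: "q powr (\<nu> + real (Suc k)) = q powr (\<nu> + real k + 1)" by (simp add: add_ac)
    have e2: "w powr of_real (\<nu> + 2 * real (Suc k)) / w = w powr complex_of_real (\<nu> + 1 + 2 * real k)"
    proof -
      have "\<nu> + 1 + 2 * real k = (\<nu> + 2 * real (Suc k)) - 1" by simp
      then show ?thesis by (simp only: powr_minus1[OF w])
    qed
    show "?b (Suc k) = of_real (q powr (\<nu>/2)) * (complex_of_real (cf q (\<nu> + 1) k) * w powr complex_of_real (\<nu> + 1 + 2 * real k))"
      unfolding e1 e2 cf_R2[OF q, of \<nu> k] by (simp add: mult_ac)
  qed
  moreover have "(\<lambda>k. of_real (q powr (\<nu>/2)) * (complex_of_real (cf q (\<nu> + 1) k) * w powr complex_of_real (\<nu> + 1 + 2 * real k))) sums ?S"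
    by (rule sums_mult) (use I3_sums[OF q z, of "\<nu> + 1"] in \<open>simp add: w_def\<close>)
  ultimately have "(\<lambda>n. ?b (Suc n)) sums ?S" by simp
  then have "?b sums (?S + ?b 0)" by (rule sums_Suc)
  then show ?thesis by simp
qed

lemma a_sums:
  assumes q: "0 < q" "q < 1" and z: "z \<noteq> 0"
  defines "w \<equiv> z / 2"
  shows "(\<lambda>k. complex_of_real (q powr (- \<nu>/2) * cf q (\<nu> - 1) k) * (w powr of_real (\<nu> + 2 * real k) / w))
         sums (of_real (q powr (- \<nu>/2)) * I3 q (\<nu> - 1) z)"
proof -
  have w: "w \<noteq> 0" using z by (simp add: w_def)
  have e: "w powr of_real (\<nu> - 1 + 2 * real k) = w powr of_real (\<nu> + 2 * real k) / w" for k
  proof -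
    have "\<nu> - 1 + 2 * real k = (\<nu> + 2 * real k) - 1" by simp
    then show ?thesis by (simp only: powr_minus1[OF w])
  qed
  from sums_mult[OF I3_sums[OF q z, of "\<nu> - 1"], of "of_real (q powr (- \<nu>/2))"]
  show ?thesis unfolding w_def[symmetric] e by (simp add: mult_ac)
qed

lemma IdA:
  assumes q: "0 < q" "q < 1" and z: "z \<noteq> 0"
  shows "of_real (q powr (-\<nu>/2)) * I3 q (\<nu> - 1) z - of_real (q powr (\<nu>/2)) * I3 q (\<nu> + 1) z
       = (2 / (of_real (1 - q^2) * z)) * of_real (q powr (-\<nu>) - q powr \<nu>) * I3 q \<nu> (of_real (q powr (1/2)) * z)"
proof -
  define w where "w = z / 2"
  have w: "w \<noteq> 0" using z by (simp add: w_def)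
  have zw: "z = 2 * w" by (simp add: w_def)
  have "q^2 < 1" using q by (auto simp: power_less_one_iff)
  then have E: "1 - q^2 \<noteq> 0" by simp
  have r: "0 < q powr (1/2)" using q by simp
  have s1: "(\<lambda>k. complex_of_real (q powr (- \<nu>/2) * cf q (\<nu> - 1) k) * (w powr of_real (\<nu> + 2 * real k) / w)
     - complex_of_real (q powr (\<nu>/2) * inverse (q powr (\<nu> + real k)) * ((1 - (q^2) ^ k) / (1 - q^2)) * cf q \<nu> k)
            * (w powr of_real (\<nu> + 2 * real k) / w))
     sums (of_real (q powr (-\<nu>/2)) * I3 q (\<nu> - 1) z - of_real (q powr (\<nu>/2)) * I3 q (\<nu> + 1) z)"
    unfolding w_def by (intro sums_diff a_sums[OF q z] b_shift_sums[OF q z])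
  have s2: "(\<lambda>k. (2 / (of_real (1 - q^2) * z)) * of_real (q powr (-\<nu>) - q powr \<nu>) *
      (complex_of_real (cf q \<nu> k) * (complex_of_real ((q powr (1/2)) powr (\<nu> + 2 * real k)) * w powr complex_of_real (\<nu> + 2 * real k))))
     sums ((2 / (of_real (1 - q^2) * z)) * of_real (q powr (-\<nu>) - q powr \<nu>) * I3 q \<nu> (of_real (q powr (1/2)) * z))"
    unfolding w_def by (intro sums_mult I3_scaled_sums[OF q z r])
  have eq: "complex_of_real (q powr (- \<nu>/2) * cf q (\<nu> - 1) k) * (w powr of_real (\<nu> + 2 * real k) / w)
     - complex_of_real (q powr (\<nu>/2) * inverse (q powr (\<nu> + real k)) * ((1 - (q^2) ^ k) / (1 - q^2)) * cf q \<nu> k)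
            * (w powr of_real (\<nu> + 2 * real k) / w)
     = (2 / (of_real (1 - q^2) * z)) * of_real (q powr (-\<nu>) - q powr \<nu>) *
      (complex_of_real (cf q \<nu> k) * (complex_of_real ((q powr (1/2)) powr (\<nu> + 2 * real k)) * w powr complex_of_real (\<nu> + 2 * real k)))" for k
    unfolding zw cplx_alg1[OF w E] coefA[OF q, symmetric] by (simp add: algebra_simps)
  show ?thesis using sums_unique2[OF s1 s2[folded eq]] .
qed

lemma IdB:
  assumes q: "0 < q" "q < 1" and z: "z \<noteq> 0"
  shows "of_real (q powr (-\<nu>/2)) * I3 q (\<nu> - 1) z + of_real (q powr (\<nu>/2)) * I3 q (\<nu> + 1) z
       = (4 / (of_real (1 - q^2) * z)) * I3 q \<nu> (of_real (q powr (-1/2)) * z)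
         - (2 / (of_real (1 - q^2) * z)) * of_real (q powr (-\<nu>) + q powr \<nu>) * I3 q \<nu> (of_real (q powr (1/2)) * z)"
proof -
  define w where "w = z / 2"
  have w: "w \<noteq> 0" using z by (simp add: w_def)
  have zw: "z = 2 * w" by (simp add: w_def)
  have "q^2 < 1" using q by (auto simp: power_less_one_iff)
  then have E: "1 - q^2 \<noteq> 0" by simp
  have r: "0 < q powr (1/2)" "0 < q powr (-1/2)" using q by simp_all
  have s1: "(\<lambda>k. complex_of_real (q powr (- \<nu>/2) * cf q (\<nu> - 1) k) * (w powr of_real (\<nu> + 2 * real k) / w)
     + complex_of_real (q powr (\<nu>/2) * inverse (q powr (\<nu> + real k)) * ((1 - (q^2) ^ k) / (1 - q^2)) * cf q \<nu> k)
            * (w powr of_real (\<nu> + 2 * real k) / w))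
     sums (of_real (q powr (-\<nu>/2)) * I3 q (\<nu> - 1) z + of_real (q powr (\<nu>/2)) * I3 q (\<nu> + 1) z)"
    unfolding w_def by (intro sums_add a_sums[OF q z] b_shift_sums[OF q z])
  have s2: "(\<lambda>k. (4 / (of_real (1 - q^2) * z)) *
      (complex_of_real (cf q \<nu> k) * (complex_of_real ((q powr (-1/2)) powr (\<nu> + 2 * real k)) * w powr complex_of_real (\<nu> + 2 * real k)))
      - (2 / (of_real (1 - q^2) * z)) * of_real (q powr (-\<nu>) + q powr \<nu>) *
      (complex_of_real (cf q \<nu> k) * (complex_of_real ((q powr (1/2)) powr (\<nu> + 2 * real k)) * w powr complex_of_real (\<nu> + 2 * real k))))
     sums ((4 / (of_real (1 - q^2) * z)) * I3 q \<nu> (of_real (q powr (-1/2)) * z)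
         - (2 / (of_real (1 - q^2) * z)) * of_real (q powr (-\<nu>) + q powr \<nu>) * I3 q \<nu> (of_real (q powr (1/2)) * z))"
    unfolding w_def by (intro sums_diff sums_mult I3_scaled_sums[OF q z r(2)] I3_scaled_sums[OF q z r(1)])
  have eq: "complex_of_real (q powr (- \<nu>/2) * cf q (\<nu> - 1) k) * (w powr of_real (\<nu> + 2 * real k) / w)
     + complex_of_real (q powr (\<nu>/2) * inverse (q powr (\<nu> + real k)) * ((1 - (q^2) ^ k) / (1 - q^2)) * cf q \<nu> k)
            * (w powr of_real (\<nu> + 2 * real k) / w)
     = (4 / (of_real (1 - q^2) * z)) *
      (complex_of_real (cf q \<nu> k) * (complex_of_real ((q powr (-1/2)) powr (\<nu> + 2 * real k)) * w powr complex_of_real (\<nu> + 2 * real k)))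
      - (2 / (of_real (1 - q^2) * z)) * of_real (q powr (-\<nu>) + q powr \<nu>) *
      (complex_of_real (cf q \<nu> k) * (complex_of_real ((q powr (1/2)) powr (\<nu> + 2 * real k)) * w powr complex_of_real (\<nu> + 2 * real k)))" for k
  proof -
    have "complex_of_real (q powr (- \<nu>/2) * cf q (\<nu> - 1) k) * (w powr of_real (\<nu> + 2 * real k) / w) + complex_of_real (q powr (\<nu>/2) * inverse (q powr (\<nu> + real k)) * ((1 - (q^2) ^ k) / (1 - q^2)) * cf q \<nu> k) * (w powr of_real (\<nu> + 2 * real k) / w)
        = complex_of_real (q powr (- \<nu>/2) * cf q (\<nu> - 1) k + q powr (\<nu>/2) * inverse (q powr (\<nu> + real k)) * ((1 - (q^2) ^ k) / (1 - q^2)) * cf q \<nu> k) * (w powr of_real (\<nu> + 2 * real k) / w)" by (simp only: of_real_add distrib_right)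
    also have "\<dots> = complex_of_real (2 / (1 - q^2) * (q powr (-1/2)) powr (\<nu> + 2 * real k) * cf q \<nu> k - (q powr (- \<nu>) + q powr \<nu>) / (1 - q^2) * (q powr (1/2)) powr (\<nu> + 2 * real k) * cf q \<nu> k) * (w powr of_real (\<nu> + 2 * real k) / w)" by (simp only: coefB[OF q])
    also have "\<dots> = complex_of_real (2 / (1 - q^2) * (q powr (-1/2)) powr (\<nu> + 2 * real k) * cf q \<nu> k) * (w powr of_real (\<nu> + 2 * real k) / w) - complex_of_real ((q powr (- \<nu>) + q powr \<nu>) / (1 - q^2) * (q powr (1/2)) powr (\<nu> + 2 * real k) * cf q \<nu> k) * (w powr of_real (\<nu> + 2 * real k) / w)"
      by (simp only: of_real_diff left_diff_distrib)
    finally show ?thesis unfolding zw cplx_alg1[OF w E] cplx_alg2[OF w E] .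
  qed
  show ?thesis using sums_unique2[OF s1 s2[folded eq]] .
qed



definition Af :: "real \<Rightarrow> real \<Rightarrow> real" where
  "Af q \<nu> = 1/2 * q powr (- (\<nu>^2) + \<nu>) * qGamma (q^2) \<nu> * qGamma (q^2) (1 - \<nu>)"

lemma K3_form_Af: "K3_form q \<nu> z = of_real (Af q \<nu>) * (I3 q (- \<nu>) z - I3 q \<nu> z)"
  by (simp add: K3_form_def Af_def)

lemma qGamma_rG: "qGamma Q x = inverse (rG Q x)"
  by (simp add: rG_def)

lemma powr_ne_1:
  fixes Q \<nu> :: real
  assumes "0 < Q" "Q < 1" "\<nu> \<noteq> 0"
  shows "Q powr \<nu> \<noteq> 1"
proof
  assume "Q powr \<nu> = 1"
  moreover have "Q powr \<nu> = exp (\<nu> * ln Q)" using assms by (auto simp: powr_def)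
  ultimately have "exp (\<nu> * ln Q) = 1" by simp
  then have "\<nu> * ln Q = 0" by simp
  moreover have "ln Q \<noteq> 0" using assms by simp
  ultimately show False using assms by simp
qed

lemma alg_A:
  fixes t a g1 g2 E :: real
  assumes "t > 0" "t \<noteq> 1" "E \<noteq> 0"
  shows "1/2 * (a * inverse t) * ((1 - t) / E * g1) * (inverse ((1 - inverse t) / E) * g2) = - (1/2 * a * g1 * g2)"
proof -
  have "1 - inverse t \<noteq> 0" using assms by (simp add: field_simps)
  then show ?thesis using assms by (simp add: field_simps)
qed

lemma inv_lem: "(c::real) \<noteq> 0 \<Longrightarrow> inverse x = c * inverse (c * x)"
  by (simp add: inverse_mult_distrib)

lemma Af_shift:
  assumes q: "0 < q" "q < 1" and nu: "\<nu> \<noteq> 0"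
  shows "Af q (\<nu> + 1) = - Af q \<nu>"
proof -
  define Q where "Q = q^2"
  have Q: "0 < Q" "Q < 1" using q by (auto simp: Q_def power_less_one_iff)
  define t where "t = Q powr \<nu>"
  have t: "t > 0" "t \<noteq> 1" using powr_ne_1[OF Q nu] Q by (auto simp: t_def)
  have tm: "Q powr (- \<nu>) = inverse t" by (simp add: t_def powr_minus)
  have E: "1 - Q \<noteq> 0" using Q by simp
  have ne1: "(1 - t) / (1 - Q) \<noteq> 0" using t E by simp
  have ne2: "(1 - inverse t) / (1 - Q) \<noteq> 0" using t E by (simp add: field_simps)
  have r1: "rG Q \<nu> = (1 - t) / (1 - Q) * rG Q (\<nu> + 1)" using rG_rec[OF Q, of \<nu>] by (simp add: t_def)
  have r2: "rG Q (- \<nu>) = (1 - inverse t) / (1 - Q) * rG Q (1 - \<nu>)" using rG_rec[OF Q, of "- \<nu>"] tm by (simp add: add.commute)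
  have g1: "qGamma Q (\<nu> + 1) = (1 - t) / (1 - Q) * qGamma Q \<nu>"
    unfolding qGamma_rG r1 by (rule inv_lem[OF ne1])
  have g2: "qGamma Q (1 - (\<nu> + 1)) = inverse ((1 - inverse t) / (1 - Q)) * qGamma Q (1 - \<nu>)"
  proof -
    have m: "1 - (\<nu> + 1) = - \<nu>" by simp
    show ?thesis unfolding m qGamma_rG r2 by (rule inverse_mult_distrib)
  qed
  have p: "q powr (- ((\<nu> + 1)^2) + (\<nu> + 1)) = q powr (- (\<nu>^2) + \<nu>) * inverse t"
  proof -
    have ex: "- ((\<nu> + 1)^2) + (\<nu> + 1) = (- (\<nu>^2) + \<nu>) + (- (2 * \<nu>))" by (simp add: power2_eq_square algebra_simps)
    have tt: "q powr (2 * \<nu>) = t" unfolding t_def Q_def using q by (simp add: powr_powr[symmetric] powr_realpow)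
    have "q powr (- ((\<nu> + 1)^2) + (\<nu> + 1)) = q powr ((- (\<nu>^2) + \<nu>) + (- (2 * \<nu>)))" by (simp only: ex)
    also have "\<dots> = q powr (- (\<nu>^2) + \<nu>) * inverse (q powr (2 * \<nu>))" by (simp only: powr_add powr_minus)
    finally show ?thesis unfolding tt .
  qed
  show ?thesis
    unfolding Af_def Q_def[symmetric] g1 g2 p by (rule alg_A[OF t E])
qed

lemma K_identities:
  assumes q: "0 < q" "q < 1" and z: "z \<noteq> 0" and nu0: "\<nu> \<noteq> 0" and nu1: "\<nu> \<noteq> 1"
  shows "complex_of_real (q powr (-\<nu>/2)) * K3_form q (\<nu> - 1) z
           - complex_of_real (q powr (\<nu>/2)) * K3_form q (\<nu> + 1) z
         = - (2 / (complex_of_real (1 - q^2) * z))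
             * complex_of_real (q powr (-\<nu>) - q powr \<nu>)
             * K3_form q \<nu> (complex_of_real (q powr (1/2)) * z)"
    and "complex_of_real (q powr (-\<nu>/2)) * K3_form q (\<nu> - 1) z
           + complex_of_real (q powr (\<nu>/2)) * K3_form q (\<nu> + 1) z
         = - (4 / (complex_of_real (1 - q^2) * z))
             * K3_form q \<nu> (complex_of_real (q powr (-1/2)) * z)
           + (2 / (complex_of_real (1 - q^2) * z))
             * complex_of_real (q powr (-\<nu>) + q powr \<nu>)
             * K3_form q \<nu> (complex_of_real (q powr (1/2)) * z)"
proof -
  have Am: "Af q (\<nu> - 1) = - Af q \<nu>"
    using Af_shift[OF q, of "\<nu> - 1"] nu1 by simp
  have Ap: "Af q (\<nu> + 1) = - Af q \<nu>" by (rule Af_shift[OF q nu0])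
  define A where "A = complex_of_real (Af q \<nu>)"
  define p where "p = complex_of_real (q powr (-\<nu>/2))"
  define p' where "p' = complex_of_real (q powr (\<nu>/2))"
  define a1 where "a1 = I3 q (\<nu> - 1) z"
  define a2 where "a2 = I3 q (\<nu> + 1) z"
  define b1 where "b1 = I3 q (- \<nu> + 1) z"
  define b2 where "b2 = I3 q (- \<nu> - 1) z"
  define c1 where "c1 = I3 q \<nu> (complex_of_real (q powr (1/2)) * z)"
  define c2 where "c2 = I3 q (- \<nu>) (complex_of_real (q powr (1/2)) * z)"
  define d1 where "d1 = I3 q \<nu> (complex_of_real (q powr (-1/2)) * z)"
  define d2 where "d2 = I3 q (- \<nu>) (complex_of_real (q powr (-1/2)) * z)"
  define C where "C = (2 / (complex_of_real (1 - q^2) * z)) * complex_of_real (q powr (-\<nu>) - q powr \<nu>)"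
  define D where "D = 4 / (complex_of_real (1 - q^2) * z)"
  define E where "E = (2 / (complex_of_real (1 - q^2) * z)) * complex_of_real (q powr (-\<nu>) + q powr \<nu>)"
  have hA: "p * a1 - p' * a2 = C * c1"
    unfolding p_def p'_def a1_def a2_def C_def c1_def using IdA[OF q z, of \<nu>] by (simp add: mult.assoc)
  have hA': "p * b1 - p' * b2 = C * c2"
  proof -
    have "p' * b2 - p * b1 = (2 / (complex_of_real (1 - q^2) * z)) * complex_of_real (q powr \<nu> - q powr (-\<nu>)) * c2"
      unfolding p_def p'_def b1_def b2_def c2_def using IdA[OF q z, of "- \<nu>"] by simp
    note eq = this
    have e: "C = - ((2 / (complex_of_real (1 - q^2) * z)) * complex_of_real (q powr \<nu> - q powr (-\<nu>)))"
    proof -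
      have "complex_of_real (q powr (-\<nu>) - q powr \<nu>) = - complex_of_real (q powr \<nu> - q powr (-\<nu>))" by simp
      then show ?thesis unfolding C_def by (simp only: mult_minus_right)
    qed
    have "p * b1 - p' * b2 = - (p' * b2 - p * b1)" by simp
    also have "\<dots> = C * c2" unfolding eq e by simp
    finally show ?thesis .
  qed
  have hB: "p * a1 + p' * a2 = D * d1 - E * c1"
    unfolding p_def p'_def a1_def a2_def D_def E_def c1_def d1_def using IdB[OF q z, of \<nu>] by (simp add: mult.assoc)
  have hB': "p * b1 + p' * b2 = D * d2 - E * c2"
  proof -
    have "p' * b2 + p * b1 = D * d2 - (2 / (complex_of_real (1 - q^2) * z)) * complex_of_real (q powr \<nu> + q powr (-\<nu>)) * c2"
      unfolding p_def p'_def b1_def b2_def c2_def D_def d2_def using IdB[OF q z, of "- \<nu>"] by simp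
    then show ?thesis unfolding E_def by (simp add: algebra_simps)
  qed
  have Km: "K3_form q (\<nu> - 1) z = - A * (b1 - a1)"
    unfolding K3_form_Af Am A_def a1_def b1_def by simp
  have Kp: "K3_form q (\<nu> + 1) z = - A * (b2 - a2)"
  proof -
    have "- (\<nu> + 1) = - \<nu> - 1" by simp
    then show ?thesis unfolding K3_form_Af Ap A_def a2_def b2_def by simp
  qed
  have Kc: "K3_form q \<nu> (complex_of_real (q powr (1/2)) * z) = A * (c2 - c1)"
    unfolding K3_form_Af A_def c1_def c2_def ..
  have Kd: "K3_form q \<nu> (complex_of_real (q powr (-1/2)) * z) = A * (d2 - d1)"
    unfolding K3_form_Af A_def d1_def d2_def ..
  show "complex_of_real (q powr (-\<nu>/2)) * K3_form q (\<nu> - 1) z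
           - complex_of_real (q powr (\<nu>/2)) * K3_form q (\<nu> + 1) z
         = - (2 / (complex_of_real (1 - q^2) * z))
             * complex_of_real (q powr (-\<nu>) - q powr \<nu>)
             * K3_form q \<nu> (complex_of_real (q powr (1/2)) * z)"
  proof -
    have "p * K3_form q (\<nu> - 1) z - p' * K3_form q (\<nu> + 1) z = - A * ((p * b1 - p' * b2) - (p * a1 - p' * a2))"
      unfolding Km Kp by (simp add: algebra_simps)
    also have "\<dots> = - C * K3_form q \<nu> (complex_of_real (q powr (1/2)) * z)"
      unfolding hA hA' Kc by (simp add: algebra_simps)
    finally show ?thesis unfolding p_def p'_def C_def by simp
  qed
  show "complex_of_real (q powr (-\<nu>/2)) * K3_form q (\<nu> - 1) z
           + complex_of_real (q powr (\<nu>/2)) * K3_form q (\<nu> + 1) z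
         = - (4 / (complex_of_real (1 - q^2) * z))
             * K3_form q \<nu> (complex_of_real (q powr (-1/2)) * z)
           + (2 / (complex_of_real (1 - q^2) * z))
             * complex_of_real (q powr (-\<nu>) + q powr \<nu>)
             * K3_form q \<nu> (complex_of_real (q powr (1/2)) * z)"
  proof -
    have "p * K3_form q (\<nu> - 1) z + p' * K3_form q (\<nu> + 1) z = - A * ((p * b1 + p' * b2) - (p * a1 + p' * a2))"
      unfolding Km Kp by (simp add: algebra_simps)
    also have "\<dots> = - D * K3_form q \<nu> (complex_of_real (q powr (-1/2)) * z) + E * K3_form q \<nu> (complex_of_real (q powr (1/2)) * z)"
      unfolding hB hB' Kc Kd by (simp add: algebra_simps)
    finally show ?thesis unfolding p_def p'_def D_def E_def by simp
  qed
qed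



lemma cf_neg_zero:
  assumes q: "0 < q" "q < 1" and k: "k < m"
  shows "cf q (- real m) k = 0"
proof -
  have Q: "0 < q^2" "q^2 < 1" using q by (auto simp: power_less_one_iff)
  have e: "- real m + real k + 1 = - real (m - k - 1)" using k by (simp add: of_nat_diff)
  have "rG (q^2) (- real m + real k + 1) = 0" unfolding e by (rule rG_nonpos_int[OF Q])
  then show ?thesis unfolding cf_rG by simp
qed

lemma cf_neg_shift:
  assumes q: "0 < q" "q < 1"
  shows "cf q (- real m) (j + m) = cf q (real m) j"
proof -
  define Q where "Q = q^2"
  have Q: "0 < Q" "Q < 1" using q by (auto simp: Q_def power_less_one_iff)
  have e1: "- real m + real (j + m) + 1 = real j + 1" by simp
  have e2: "real m + real j + 1 = real (m + j) + 1" by simp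
  have e3: "real (j + m) * (- real m + real (j + m)) = real j * (real m + real j)" by (simp add: algebra_simps)
  have p1: "qpoch Q Q j > 0" "qpoch Q Q (m + j) > 0" using qpoch_pos[OF Q] by auto
  show ?thesis
    unfolding cf_rG Q_def[symmetric] e1 e2 e3 rG_nat[OF Q]
    using p1 by (simp add: add.commute power_add field_simps)
qed

lemma I3_neg_nat:
  assumes q: "0 < q" "q < 1" and z: "z \<noteq> 0"
  shows "I3 q (- real m) z = I3 q (real m) z"
proof -
  let ?f = "\<lambda>k. complex_of_real (cf q (- real m) k) * (z / 2) powr complex_of_real (- real m + 2 * real k)"
  have s: "?f sums I3 q (- real m) z" by (rule I3_sums[OF q z])
  have "(\<lambda>i. ?f (i + m)) sums I3 q (- real m) z"
    using s by (subst sums_zero_iff_shift) (auto simp: cf_neg_zero[OF q])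
  moreover have "(\<lambda>i. ?f (i + m)) = (\<lambda>k. complex_of_real (cf q (real m) k) * (z / 2) powr complex_of_real (real m + 2 * real k))"
  proof
    fix i
    have "- real m + 2 * real (i + m) = real m + 2 * real i" by simp
    then show "?f (i + m) = complex_of_real (cf q (real m) i) * (z / 2) powr complex_of_real (real m + 2 * real i)"
      by (simp only: cf_neg_shift[OF q])
  qed
  ultimately show ?thesis using I3_sums[OF q z, of "real m"] sums_unique2 by metis
qed

lemma I3_neg_int:
  assumes q: "0 < q" "q < 1" and z: "z \<noteq> 0" and n: "n \<in> \<int>"
  shows "I3 q (- n) z = I3 q n z"
proof -
  from n obtain i where i: "n = of_int i" by (auto elim: Ints_cases)
  show ?thesis
  proof (cases "i \<ge> 0")
    case True
    then have nn: "n = real (nat i)" using i by simp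
    show ?thesis unfolding nn by (rule I3_neg_nat[OF q z])
  next
    case False
    then have nn: "n = - real (nat (- i))" using i by simp
    have "I3 q (- n) z = I3 q (real (nat (- i))) z" unfolding nn by simp
    also have "\<dots> = I3 q (- real (nat (- i))) z" by (rule I3_neg_nat[OF q z, symmetric])
    also have "\<dots> = I3 q n z" unfolding nn ..
    finally show ?thesis .
  qed
qed

definition Dq :: "real \<Rightarrow> real \<Rightarrow> real" where
  "Dq Q \<mu> = qpoch_inf (Q powr \<mu>) Q * qpoch_inf (Q powr (1 - \<mu>)) Q"

lemma Af_Dq:
  assumes q: "0 < q" "q < 1"
  shows "Af q \<mu> = 1/2 * q powr (- (\<mu>^2) + \<mu>) * (qpoch_inf (q^2) (q^2) ^ 2 * (1 - q^2)) / Dq (q^2) \<mu>"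
proof -
  define Q where "Q = q^2"
  have Q: "0 < Q" "Q < 1" using q by (auto simp: Q_def power_less_one_iff)
  have pw: "(1 - Q) powr (1 - \<mu>) * (1 - Q) powr (1 - (1 - \<mu>)) = 1 - Q"
  proof -
    have "(1 - Q) powr (1 - \<mu>) * (1 - Q) powr (1 - (1 - \<mu>)) = (1 - Q) powr ((1 - \<mu>) + (1 - (1 - \<mu>)))"
      by (simp only: powr_add)
    also have "(1 - \<mu>) + (1 - (1 - \<mu>)) = 1" by simp
    finally show ?thesis using Q by simp
  qed
  have ab: "\<And>a P P1 P2 x y :: real. a * (P / P1 * x) * (P / P2 * y) = a * (P ^ 2 * (x * y)) / (P1 * P2)"
    by (simp add: divide_inverse inverse_mult_distrib power2_eq_square mult_ac)
  show ?thesis unfolding Af_def Q_def[symmetric] qGamma_def Dq_def ab pw ..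
qed



lemma powr_lim:
  fixes Q n :: real
  assumes Q: "0 < Q"
  shows "((\<lambda>\<mu>. (1 - Q powr (\<mu> - n)) / (\<mu> - n)) \<longlongrightarrow> - ln Q) (at n)"
proof -
  define f where "f \<mu> = exp ((\<mu> - n) * ln Q)" for \<mu>
  have "(f has_real_derivative (exp ((n - n) * ln Q) * (1 * ln Q))) (at n)"
    unfolding f_def by (intro derivative_eq_intros) auto
  then have "(f has_real_derivative ln Q) (at n)" by simp
  then have "((\<lambda>y. (f y - f n) / (y - n)) \<longlongrightarrow> ln Q) (at n)"
    by (simp add: has_field_derivative_iff)
  then have "((\<lambda>y. - ((f y - f n) / (y - n))) \<longlongrightarrow> - ln Q) (at n)"
    by (rule tendsto_minus)
  moreover have "(\<lambda>y. - ((f y - f n) / (y - n))) = (\<lambda>\<mu>. (1 - Q powr (\<mu> - n)) / (\<mu> - n))"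
  proof
    fix y
    have "f y = Q powr (y - n)" "f n = 1" using Q by (auto simp: f_def powr_def mult.commute)
    then show "- ((f y - f n) / (y - n)) = (1 - Q powr (y - n)) / (y - n)"
      by (simp add: minus_divide_left)
  qed
  ultimately show ?thesis by simp
qed

lemma Dq_sym: "Dq Q (1 - \<mu>) = Dq Q \<mu>"
  by (simp add: Dq_def mult.commute)

lemma Dq_lim_nonpos:
  assumes Q: "0 < Q" "Q < 1"
  shows "\<exists>L. L \<noteq> 0 \<and> ((\<lambda>\<mu>. Dq Q \<mu> / (\<mu> - (- real m))) \<longlongrightarrow> L) (at (- real m))"
proof -
  define n where "n = - real m"
  define a where "a = (\<lambda>j. Q ^ j)"
  define a' where "a' = a(m := 0)"
  have sa: "summable (\<lambda>j. \<bar>a j\<bar>)" unfolding a_def using Q by (intro summ_Q) auto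
  have sa': "summable (\<lambda>j. \<bar>a' j\<bar>)"
    by (rule summable_comparison_test[OF _ sa]) (auto simp: a'_def)
  have split: "qpoch_inf x Q = (1 - x * Q ^ m) * Pg a' x" for x
    unfolding qpoch_inf_Pg a'_def using Pg_split[OF sa, of x m] by (simp add: a_def)
  have pm: "Q powr \<mu> * Q ^ m = Q powr (\<mu> - n)" for \<mu>
    using Q by (simp add: n_def powr_add powr_realpow[symmetric])
  have eq: "Dq Q \<mu> / (\<mu> - n) = ((1 - Q powr (\<mu> - n)) / (\<mu> - n)) * Pg a' (Q powr \<mu>) * Pg a (Q powr (1 - \<mu>))" for \<mu>
    unfolding Dq_def split[of "Q powr \<mu>"] pm by (simp add: qpoch_inf_Pg a_def)
  have l1: "((\<lambda>\<mu>. (1 - Q powr (\<mu> - n)) / (\<mu> - n)) \<longlongrightarrow> - ln Q) (at n)" by (rule powr_lim[OF Q(1)])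
  have l2: "((\<lambda>\<mu>. Pg a' (Q powr \<mu>)) \<longlongrightarrow> Pg a' (Q powr n)) (at n)"
    by (rule isCont_tendsto_compose[OF Pg_isCont[OF sa']]) (use Q in \<open>auto intro!: tendsto_eq_intros\<close>)
  have l3: "((\<lambda>\<mu>. Pg a (Q powr (1 - \<mu>))) \<longlongrightarrow> Pg a (Q powr (1 - n))) (at n)"
    by (rule isCont_tendsto_compose[OF Pg_isCont[OF sa]]) (use Q in \<open>auto intro!: tendsto_eq_intros\<close>)
  have nz1: "- ln Q \<noteq> 0" using Q by simp
  have nz2: "Pg a' (Q powr n) \<noteq> (0::real)"
  proof (rule Pg_nonzero[OF sa'])
    fix j
    show "1 - Q powr n * of_real (a' j) \<noteq> 0"
    proof (cases "j = m")
      case True then show ?thesis by (simp add: a'_def)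
    next
      case False
      have "Q powr n * Q ^ j = Q powr (- real m) * Q powr (real j)"
        using Q by (simp add: n_def powr_realpow)
      also have "\<dots> = Q powr (- real m + real j)" by (rule powr_add[symmetric])
      also have "- real m + real j = real j - real m" by simp
      finally have "Q powr n * Q ^ j = Q powr (real j - real m)" .
      moreover have "Q powr (real j - real m) \<noteq> 1" using False by (intro powr_ne_1[OF Q]) auto
      ultimately show ?thesis using False by (simp add: a'_def a_def)
    qed
  qed
  have nz3: "Pg a (Q powr (1 - n)) \<noteq> (0::real)"
  proof (rule Pg_nonzero[OF sa])
    fix j
    have "Q powr (1 - n) * Q ^ j = Q powr (1 + real m + real j)"
      using Q by (simp add: n_def powr_add powr_realpow[symmetric])
    moreover have "Q powr (1 + real m + real j) \<noteq> 1" by (intro powr_ne_1[OF Q]) auto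
    ultimately show "1 - Q powr (1 - n) * of_real (a j) \<noteq> 0" by (simp add: a_def)
  qed
  have "((\<lambda>\<mu>. Dq Q \<mu> / (\<mu> - n)) \<longlongrightarrow> - ln Q * Pg a' (Q powr n) * Pg a (Q powr (1 - n))) (at n)"
    unfolding eq by (intro tendsto_mult l1 l2 l3)
  moreover have "- ln Q * Pg a' (Q powr n) * Pg a (Q powr (1 - n)) \<noteq> 0" using nz1 nz2 nz3 by simp
  ultimately show ?thesis unfolding n_def[symmetric] by blast
qed

lemma ev_neq_at: "eventually (\<lambda>x. x \<noteq> (n::'a::t1_space)) (at n)"
  by (simp add: eventually_at_filter)

lemma filterlim_one_minus: "filterlim (\<lambda>\<mu>::real. 1 - \<mu>) (at (1 - n)) (at n)"
proof (rule filterlim_atI)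
  show "((\<lambda>\<mu>. 1 - \<mu>) \<longlongrightarrow> 1 - n) (at n)" by (intro tendsto_intros)
  show "\<forall>\<^sub>F x in at n. 1 - x \<noteq> 1 - n" using ev_neq_at[of n] by (rule eventually_mono) simp
qed

lemma Dq_lim:
  assumes Q: "0 < Q" "Q < 1" and n: "n \<in> \<int>"
  shows "\<exists>L. L \<noteq> 0 \<and> ((\<lambda>\<mu>. Dq Q \<mu> / (\<mu> - n)) \<longlongrightarrow> L) (at n)"
proof -
  from n obtain i where i: "n = of_int i" by (auto elim: Ints_cases)
  show ?thesis
  proof (cases "i \<le> 0")
    case True
    then have "n = - real (nat (- i))" using i by simp
    then show ?thesis using Dq_lim_nonpos[OF Q, of "nat (- i)"] by simp
  next
    case False
    define m where "m = nat (i - 1)"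
    have nm: "1 - n = - real m" using False i by (simp add: m_def)
    obtain L where L: "L \<noteq> 0" "((\<lambda>\<mu>. Dq Q \<mu> / (\<mu> - (- real m))) \<longlongrightarrow> L) (at (- real m))"
      using Dq_lim_nonpos[OF Q, of m] by blast
    have "((\<lambda>\<mu>. Dq Q (1 - \<mu>) / ((1 - \<mu>) - (1 - n))) \<longlongrightarrow> L) (at n)"
      using filterlim_compose[OF L(2)[folded nm] filterlim_one_minus[of n]] by simp
    then have "((\<lambda>\<mu>. - (Dq Q (1 - \<mu>) / ((1 - \<mu>) - (1 - n)))) \<longlongrightarrow> - L) (at n)"
      by (rule tendsto_minus)
    moreover have "(\<lambda>\<mu>. - (Dq Q (1 - \<mu>) / ((1 - \<mu>) - (1 - n)))) = (\<lambda>\<mu>. Dq Q \<mu> / (\<mu> - n))"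
    proof
      fix \<mu>
      have "(1 - \<mu>) - (1 - n) = - (\<mu> - n)" by simp
      then show "- (Dq Q (1 - \<mu>) / ((1 - \<mu>) - (1 - n))) = Dq Q \<mu> / (\<mu> - n)"
        by (simp add: Dq_sym minus_divide_right)
    qed
    ultimately show ?thesis using L(1) by (intro exI[of _ "- L"]) auto
  qed
qed



lemma filterlim_of_real_at: "filterlim complex_of_real (at (complex_of_real n)) (at n)"
proof (rule filterlim_atI)
  show "(complex_of_real \<longlongrightarrow> complex_of_real n) (at n)" by (intro tendsto_intros)
  show "\<forall>\<^sub>F x in at n. complex_of_real x \<noteq> complex_of_real n" using ev_neq_at[of n] by (rule eventually_mono) simp
qed

lemma g_lim:
  assumes q: "0 < q" "q < 1" and z: "z \<noteq> 0" and n: "n \<in> \<int>"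
  shows "\<exists>G. ((\<lambda>\<mu>. (I3 q (- \<mu>) z - I3 q \<mu> z) / complex_of_real (\<mu> - n)) \<longlongrightarrow> G) (at n)"
proof -
  define w where "w = z / 2"
  have w: "w \<noteq> 0" using z by (simp add: w_def)
  define Gc where "Gc s = IC q w (- s) - IC q w s" for s
  have hol: "IC q w holomorphic_on UNIV" by (rule IC_holo[OF q w])
  have d1: "IC q w field_differentiable at s" for s
    by (rule holomorphic_on_imp_differentiable_at[OF hol]) auto
  have d2: "(IC q w \<circ> (\<lambda>s. - s)) field_differentiable at s" for s
    by (rule field_differentiable_compose[OF _ d1]) (auto intro!: derivative_intros)
  have "Gc field_differentiable at (of_real n)"
    unfolding Gc_def using field_differentiable_diff[OF d2 d1] by (simp add: o_def)
  then obtain G where "(Gc has_field_derivative G) (at (of_real n))"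
    unfolding field_differentiable_def by blast
  then have lim: "((\<lambda>s. (Gc s - Gc (of_real n)) / (s - of_real n)) \<longlongrightarrow> G) (at (of_real n))"
    by (simp add: has_field_derivative_iff)
  have G0: "Gc (of_real n) = 0"
  proof -
    have "Gc (of_real n) = IC q w (of_real (- n)) - IC q w (of_real n)" by (simp add: Gc_def)
    also have "\<dots> = I3 q (- n) z - I3 q n z" unfolding w_def I3_IC[OF q] ..
    also have "\<dots> = 0" using I3_neg_int[OF q z n] by simp
    finally show ?thesis .
  qed
  have "((\<lambda>\<mu>. (Gc (of_real \<mu>) - Gc (of_real n)) / (of_real \<mu> - of_real n)) \<longlongrightarrow> G) (at n)"
    by (rule filterlim_compose[OF lim filterlim_of_real_at])
  moreover have "(\<lambda>\<mu>. (Gc (of_real \<mu>) - Gc (of_real n)) / (of_real \<mu> - of_real n)) =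
                 (\<lambda>\<mu>. (I3 q (- \<mu>) z - I3 q \<mu> z) / complex_of_real (\<mu> - n))"
  proof (rule ext)
    fix \<mu>
    have "Gc (of_real \<mu>) = I3 q (- \<mu>) z - I3 q \<mu> z" unfolding Gc_def w_def I3_IC[OF q] by simp
    then show "(Gc (of_real \<mu>) - Gc (of_real n)) / (of_real \<mu> - of_real n) = (I3 q (- \<mu>) z - I3 q \<mu> z) / complex_of_real (\<mu> - n)"
      using G0 by simp
  qed
  ultimately show ?thesis by auto
qed

lemma div_lem:
  fixes g :: complex and c D t :: real
  assumes "t \<noteq> 0"
  shows "complex_of_real (c / D) * g = complex_of_real c * ((g / complex_of_real t) / complex_of_real (D / t))"
proof (cases "D = 0")
  case True then show ?thesis by simp
next
  case False then show ?thesis using assms by (simp add: field_simps)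
qed

lemma K3_form_lim:
  assumes q: "0 < q" "q < 1" and z: "z \<noteq> 0" and n: "n \<in> \<int>"
  shows "((\<lambda>\<mu>. K3_form q \<mu> z) \<longlongrightarrow> K3 q n z) (at n)"
proof -
  have Q: "0 < q^2" "q^2 < 1" using q by (auto simp: power_less_one_iff)
  obtain G where G: "((\<lambda>\<mu>. (I3 q (- \<mu>) z - I3 q \<mu> z) / complex_of_real (\<mu> - n)) \<longlongrightarrow> G) (at n)"
    using g_lim[OF q z n] by blast
  obtain L where L: "L \<noteq> 0" "((\<lambda>\<mu>. Dq (q^2) \<mu> / (\<mu> - n)) \<longlongrightarrow> L) (at n)"
    using Dq_lim[OF Q n] by blast
  define c where "c \<mu> = 1/2 * q powr (- (\<mu>^2) + \<mu>) * (qpoch_inf (q^2) (q^2) ^ 2 * (1 - q^2))" for \<mu>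
  have c: "((\<lambda>\<mu>. complex_of_real (c \<mu>)) \<longlongrightarrow> complex_of_real (c n)) (at n)"
    unfolding c_def using q by (intro tendsto_intros) auto
  have lim: "((\<lambda>\<mu>. complex_of_real (c \<mu>) * (((I3 q (- \<mu>) z - I3 q \<mu> z) / complex_of_real (\<mu> - n)) / complex_of_real (Dq (q^2) \<mu> / (\<mu> - n))))
      \<longlongrightarrow> complex_of_real (c n) * (G / complex_of_real L)) (at n)"
    using L by (intro tendsto_mult c tendsto_divide G tendsto_of_real) auto
  have ev: "\<forall>\<^sub>F \<mu> in at n. complex_of_real (c \<mu>) * (((I3 q (- \<mu>) z - I3 q \<mu> z) / complex_of_real (\<mu> - n)) / complex_of_real (Dq (q^2) \<mu> / (\<mu> - n)))
      = K3_form q \<mu> z"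
    using ev_neq_at[of n]
  proof (rule eventually_mono)
    fix \<mu> assume "\<mu> \<noteq> n"
    then have t: "\<mu> - n \<noteq> 0" by simp
    show "complex_of_real (c \<mu>) * (((I3 q (- \<mu>) z - I3 q \<mu> z) / complex_of_real (\<mu> - n)) / complex_of_real (Dq (q^2) \<mu> / (\<mu> - n)))
      = K3_form q \<mu> z"
      unfolding K3_form_Af Af_Dq[OF q] c_def[symmetric] div_lem[OF t] ..
  qed
  have "((\<lambda>\<mu>. K3_form q \<mu> z) \<longlongrightarrow> complex_of_real (c n) * (G / complex_of_real L)) (at n)"
    by (rule Lim_transform_eventually[OF lim ev])
  moreover then have "K3 q n z = complex_of_real (c n) * (G / complex_of_real L)"
    unfolding K3_def using n by (simp add: tendsto_Lim)
  ultimately show ?thesis by simp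
qed

lemma shift_lim:
  fixes f :: "real \<Rightarrow> complex"
  assumes "(f \<longlongrightarrow> L) (at (n + c))"
  shows "((\<lambda>\<mu>. f (\<mu> + c)) \<longlongrightarrow> L) (at n)"
proof -
  have "filterlim (\<lambda>\<mu>::real. \<mu> + c) (at (n + c)) (at n)"
  proof (rule filterlim_atI)
    show "((\<lambda>\<mu>. \<mu> + c) \<longlongrightarrow> n + c) (at n)" by (intro tendsto_intros)
    show "\<forall>\<^sub>F x in at n. x + c \<noteq> n + c" using ev_neq_at[of n] by (rule eventually_mono) simp
  qed
  from filterlim_compose[OF assms this] show ?thesis .
qed



lemma lim_eq:
  fixes f g :: "real \<Rightarrow> complex"
  assumes "(f \<longlongrightarrow> a) (at \<nu>)" "(g \<longlongrightarrow> b) (at \<nu>)" "eventually (\<lambda>\<mu>. f \<mu> = g \<mu>) (at \<nu>)"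
  shows "a = b"
proof -
  have "(g \<longlongrightarrow> a) (at \<nu>)" by (rule Lim_transform_eventually[OF assms(1,3)])
  then show ?thesis using assms(2) by (intro tendsto_unique[of "at \<nu>"]) auto
qed

lemma ev_nonint:
  assumes "\<nu> \<in> \<int>"
  shows "eventually (\<lambda>\<mu>::real. \<mu> \<notin> \<int>) (at \<nu>)"
proof -
  have "eventually (\<lambda>\<mu>::real. \<mu> \<noteq> \<nu> \<and> dist \<mu> \<nu> < 1) (at \<nu>)"
    unfolding eventually_at by (intro exI[of _ 1]) auto
  then show ?thesis
  proof (rule eventually_mono)
    fix \<mu> assume a: "\<mu> \<noteq> \<nu> \<and> dist \<mu> \<nu> < 1"
    show "\<mu> \<notin> \<int>"
    proof
      assume "\<mu> \<in> \<int>"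
      then have "\<mu> - \<nu> \<in> \<int>" using assms by simp
      moreover have "\<mu> - \<nu> \<noteq> 0" using a by simp
      ultimately have "1 \<le> \<bar>\<mu> - \<nu>\<bar>" by (rule Ints_nonzero_abs_ge1)
      then show False using a by (simp add: dist_real_def)
    qed
  qed
qed

theorem proposition3p2:
  fixes q \<nu> :: real and z :: complex
  assumes "0 < q" "q < 1"
    and "z \<notin> complex_of_real ` {..0}"
  shows "(complex_of_real (q powr (-\<nu>/2)) * K3 q (\<nu> - 1) z
           - complex_of_real (q powr (\<nu>/2)) * K3 q (\<nu> + 1) z
         = - (2 / (complex_of_real (1 - q^2) * z))
             * complex_of_real (q powr (-\<nu>) - q powr \<nu>)
             * K3 q \<nu> (complex_of_real (q powr (1/2)) * z)) \<and>
         (complex_of_real (q powr (-\<nu>/2)) * K3 q (\<nu> - 1) z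
           + complex_of_real (q powr (\<nu>/2)) * K3 q (\<nu> + 1) z
         = - (4 / (complex_of_real (1 - q^2) * z))
             * K3 q \<nu> (complex_of_real (q powr (-1/2)) * z)
           + (2 / (complex_of_real (1 - q^2) * z))
             * complex_of_real (q powr (-\<nu>) + q powr \<nu>)
             * K3 q \<nu> (complex_of_real (q powr (1/2)) * z))"
proof -
  have q: "0 < q" "q < 1" using assms(1,2) .
  have z: "z \<noteq> 0"
  proof
    assume "z = 0"
    then have "z \<in> complex_of_real ` {..0}" by (intro image_eqI[of _ _ 0]) auto
    then show False using assms(3) by simp
  qed
  have z1: "complex_of_real (q powr (1/2)) * z \<noteq> 0" and z2: "complex_of_real (q powr (-1/2)) * z \<noteq> 0"
    using z q by simp_all
  show ?thesis
  proof (cases "\<nu> \<in> \<int>")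
    case False
    have nm: "\<nu> - 1 \<notin> \<int>"
    proof
      assume "\<nu> - 1 \<in> \<int>"
      then have "(\<nu> - 1) + 1 \<in> \<int>" by simp
      then show False using False by simp
    qed
    have np: "\<nu> + 1 \<notin> \<int>"
    proof
      assume "\<nu> + 1 \<in> \<int>"
      then have "(\<nu> + 1) - 1 \<in> \<int>" by simp
      then show False using False by simp
    qed
    have n0: "\<nu> \<noteq> 0" "\<nu> \<noteq> 1" using False by auto
    have K: "\<And>x y. x \<notin> \<int> \<Longrightarrow> K3 q x y = K3_form q x y" by (simp add: K3_def)
    show ?thesis unfolding K[OF False] K[OF nm] K[OF np]
      using K_identities[OF q z n0] by blast
  next
    case True
    have nm: "\<nu> - 1 \<in> \<int>" and np: "\<nu> + 1 \<in> \<int>" using True by simp_all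
    have lm: "((\<lambda>\<mu>. K3_form q (\<mu> - 1) z) \<longlongrightarrow> K3 q (\<nu> - 1) z) (at \<nu>)"
      using shift_lim[of "\<lambda>x. K3_form q x z" "K3 q (\<nu> - 1) z" \<nu> "-1"] K3_form_lim[OF q z nm] by simp
    have lp: "((\<lambda>\<mu>. K3_form q (\<mu> + 1) z) \<longlongrightarrow> K3 q (\<nu> + 1) z) (at \<nu>)"
      using shift_lim[of "\<lambda>x. K3_form q x z" "K3 q (\<nu> + 1) z" \<nu> "1"] K3_form_lim[OF q z np] by simp
    have l1: "((\<lambda>\<mu>. K3_form q \<mu> (complex_of_real (q powr (1/2)) * z)) \<longlongrightarrow> K3 q \<nu> (complex_of_real (q powr (1/2)) * z)) (at \<nu>)"
      by (rule K3_form_lim[OF q z1 True])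
    have l2: "((\<lambda>\<mu>. K3_form q \<mu> (complex_of_real (q powr (-1/2)) * z)) \<longlongrightarrow> K3 q \<nu> (complex_of_real (q powr (-1/2)) * z)) (at \<nu>)"
      by (rule K3_form_lim[OF q z2 True])
    have ev: "eventually (\<lambda>\<mu>. \<mu> \<noteq> 0 \<and> \<mu> \<noteq> 1) (at \<nu>)"
      using ev_nonint[OF True] by (rule eventually_mono) auto
    have e1: "complex_of_real (q powr (-\<nu>/2)) * K3 q (\<nu> - 1) z
           - complex_of_real (q powr (\<nu>/2)) * K3 q (\<nu> + 1) z
         = - (2 / (complex_of_real (1 - q^2) * z))
             * complex_of_real (q powr (-\<nu>) - q powr \<nu>)
             * K3 q \<nu> (complex_of_real (q powr (1/2)) * z)"
    proof (rule lim_eq)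
      show "((\<lambda>\<mu>. complex_of_real (q powr (-\<mu>/2)) * K3_form q (\<mu> - 1) z
           - complex_of_real (q powr (\<mu>/2)) * K3_form q (\<mu> + 1) z) \<longlongrightarrow>
           complex_of_real (q powr (-\<nu>/2)) * K3 q (\<nu> - 1) z
           - complex_of_real (q powr (\<nu>/2)) * K3 q (\<nu> + 1) z) (at \<nu>)"
        using q by (intro tendsto_intros lm lp) auto
      show "((\<lambda>\<mu>. - (2 / (complex_of_real (1 - q^2) * z))
             * complex_of_real (q powr (-\<mu>) - q powr \<mu>)
             * K3_form q \<mu> (complex_of_real (q powr (1/2)) * z)) \<longlongrightarrow>
           - (2 / (complex_of_real (1 - q^2) * z))
             * complex_of_real (q powr (-\<nu>) - q powr \<nu>)
             * K3 q \<nu> (complex_of_real (q powr (1/2)) * z)) (at \<nu>)"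
        using q by (intro tendsto_intros l1) auto
      show "\<forall>\<^sub>F \<mu> in at \<nu>. complex_of_real (q powr (-\<mu>/2)) * K3_form q (\<mu> - 1) z
           - complex_of_real (q powr (\<mu>/2)) * K3_form q (\<mu> + 1) z =
           - (2 / (complex_of_real (1 - q^2) * z))
             * complex_of_real (q powr (-\<mu>) - q powr \<mu>)
             * K3_form q \<mu> (complex_of_real (q powr (1/2)) * z)"
        using ev by (rule eventually_mono) (intro K_identities(1)[OF q z]; simp)
    qed
    have e2: "complex_of_real (q powr (-\<nu>/2)) * K3 q (\<nu> - 1) z
           + complex_of_real (q powr (\<nu>/2)) * K3 q (\<nu> + 1) z
         = - (4 / (complex_of_real (1 - q^2) * z))
             * K3 q \<nu> (complex_of_real (q powr (-1/2)) * z)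
           + (2 / (complex_of_real (1 - q^2) * z))
             * complex_of_real (q powr (-\<nu>) + q powr \<nu>)
             * K3 q \<nu> (complex_of_real (q powr (1/2)) * z)"
    proof (rule lim_eq)
      show "((\<lambda>\<mu>. complex_of_real (q powr (-\<mu>/2)) * K3_form q (\<mu> - 1) z
           + complex_of_real (q powr (\<mu>/2)) * K3_form q (\<mu> + 1) z) \<longlongrightarrow>
           complex_of_real (q powr (-\<nu>/2)) * K3 q (\<nu> - 1) z
           + complex_of_real (q powr (\<nu>/2)) * K3 q (\<nu> + 1) z) (at \<nu>)"
        using q by (intro tendsto_intros lm lp) auto
      show "((\<lambda>\<mu>. - (4 / (complex_of_real (1 - q^2) * z))
             * K3_form q \<mu> (complex_of_real (q powr (-1/2)) * z)
           + (2 / (complex_of_real (1 - q^2) * z))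
             * complex_of_real (q powr (-\<mu>) + q powr \<mu>)
             * K3_form q \<mu> (complex_of_real (q powr (1/2)) * z)) \<longlongrightarrow>
           - (4 / (complex_of_real (1 - q^2) * z))
             * K3 q \<nu> (complex_of_real (q powr (-1/2)) * z)
           + (2 / (complex_of_real (1 - q^2) * z))
             * complex_of_real (q powr (-\<nu>) + q powr \<nu>)
             * K3 q \<nu> (complex_of_real (q powr (1/2)) * z)) (at \<nu>)"
        using q by (intro tendsto_intros l1 l2) auto
      show "\<forall>\<^sub>F \<mu> in at \<nu>. complex_of_real (q powr (-\<mu>/2)) * K3_form q (\<mu> - 1) z
           + complex_of_real (q powr (\<mu>/2)) * K3_form q (\<mu> + 1) z =
           - (4 / (complex_of_real (1 - q^2) * z))
             * K3_form q \<mu> (complex_of_real (q powr (-1/2)) * z)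
           + (2 / (complex_of_real (1 - q^2) * z))
             * complex_of_real (q powr (-\<mu>) + q powr \<mu>)
             * K3_form q \<mu> (complex_of_real (q powr (1/2)) * z)"
        using ev by (rule eventually_mono) (intro K_identities(2)[OF q z]; simp)
    qed
    show ?thesis using e1 e2 by blast
  qed
qed

end
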